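(* Let $n>5$ and let $S\in\mathcal D_n^s$ be such that one of its directed cycles has even length and the other has odd length. Then: (i) if $n$ is odd, the maximal energy among such $S$ is attained by $S\cong D_n^s[2,n-2]$ (a positive $2$-cycle and a positive $(n-2)$-cycle); (ii) the minimal energy among such $S$ is attained by $S\cong D_n^s[\boldsymbol 2,3]$ (a negative $2$-cycle and a positive $3$-cycle).
   Context: A signed digraph (sidigraph) is a digraph in which every arc carries a sign $+1$ or $-1$; its adjacency matrix $A(S)=[a_{ij}]$ has $a_{ij}$ equal to the sign of the arc $w_iw_j$ if it exists and $0$ otherwise. If $\rho_1,\dots,\rho_n$ are the eigenvalues of $A(S)$, the energy of $S$ is $E(S)=\sum_{k=1}^n|\mathrm{Re}(\rho_k)|$. The sign of a directed cycle is the product of the signs of its arcs. For $k\ge 2$, $C_k$ denotes a directed cycle of length $k$ with sign $+1$ and $\boldsymbol{C}_k$ a directed cycle of length $k$ with sign $-1$. It is known that $E(C_k)=2\cot\frac{\pi}{k}$ if $k\equiv0\pmod 4$, $2\csc\frac{\pi}{k}$ if $k\equiv 2\pmod 4$, $\csc\frac{\pi}{2k}$ if $k$ is odd; and $E(\boldsymbol C_k)=2\csc\frac{\pi}{k}$ if $k\equiv0\pmod 4$, $2\cot\frac{\pi}{k}$ if $k\equiv 2\pmod 4$, $\csc\frac{\pi}{2k}$ if $k$ is odd. $\mathcal D_n^s$ is the class of sidigraphs on $n$ vertices whose underlying graph is connected and which contain exactly two directed cycles, these two cycles being vertex-disjoint. The energy of $S\in\mathcal D_n^s$ equals the sum of the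 energies of its two directed cycles. For integers $p,q\ge 2$ with $p+q\le n$, $D_n^s[p,q]$ and $D_n^s[\boldsymbol p,q]$ denote members of $\mathcal D_n^s$ whose two directed cycles are $C_p,C_q$, respectively $\boldsymbol C_p, C_q$. *)

theory Defs
  imports "Jordan_Normal_Form.Char_Poly"
begin

text \<open>A signed digraph (sidigraph) on the vertex set {0..<n} is given by its
adjacency function A: A i j is the sign (+1 or -1) of the arc from i to j if it
exists, and 0 otherwise.\<close>

definition sidigraph :: "nat \<Rightarrow> (nat \<Rightarrow> nat \<Rightarrow> int) \<Rightarrow> bool" where
  "sidigraph n A \<longleftrightarrow>
     (\<forall>i j. A i j \<in> {-1, 0, 1}) \<and>
     (\<forall>i j. A i j \<noteq> 0 \<longrightarrow> i < n \<and> j < n \<and> i \<noteq> j)"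

definition adj_mat :: "nat \<Rightarrow> (nat \<Rightarrow> nat \<Rightarrow> int) \<Rightarrow> complex mat" where
  "adj_mat n A = mat n n (\<lambda>(i, j). complex_of_int (A i j))"

definition energy :: "nat \<Rightarrow> (nat \<Rightarrow> nat \<Rightarrow> int) \<Rightarrow> real" where
  "energy n A =
     (\<Sum>z\<in>{z. poly (char_poly (adj_mat n A)) z = 0}.
        real (order z (char_poly (adj_mat n A))) * \<bar>Re z\<bar>)"

definition underlying_connected :: "nat \<Rightarrow> (nat \<Rightarrow> nat \<Rightarrow> int) \<Rightarrow> bool" where
  "underlying_connected n A \<longleftrightarrow>
     (\<forall>i<n. \<forall>j<n. (i, j) \<in> {(u, v). A u v \<noteq> 0 \<or> A v u \<noteq> 0}\<^sup>*)"

text \<open>A directed cycle given as a list of distinct vertices v_0,...,v_{k-1}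
(k \<ge> 2) with arcs v_i v_{i+1 mod k}; the cycle itself is its set of arcs.\<close>
definition cycle_list :: "(nat \<Rightarrow> nat \<Rightarrow> int) \<Rightarrow> nat list \<Rightarrow> bool" where
  "cycle_list A vs \<longleftrightarrow> length vs \<ge> 2 \<and> distinct vs \<and>
     (\<forall>i<length vs. A (vs ! i) (vs ! ((i + 1) mod length vs)) \<noteq> 0)"

definition cycle_arcs :: "nat list \<Rightarrow> (nat \<times> nat) set" where
  "cycle_arcs vs = {(vs ! i, vs ! ((i + 1) mod length vs)) | i. i < length vs}"

definition dcycles :: "(nat \<Rightarrow> nat \<Rightarrow> int) \<Rightarrow> (nat \<times> nat) set set" where
  "dcycles A = {cycle_arcs vs | vs. cycle_list A vs}"

definition cycle_len :: "(nat \<times> nat) set \<Rightarrow> nat" where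
  "cycle_len c = card c"

definition cycle_verts :: "(nat \<times> nat) set \<Rightarrow> nat set" where
  "cycle_verts c = fst ` c"

definition cycle_sign :: "(nat \<Rightarrow> nat \<Rightarrow> int) \<Rightarrow> (nat \<times> nat) set \<Rightarrow> int" where
  "cycle_sign A c = (\<Prod>(i, j)\<in>c. A i j)"

definition in_Dns :: "nat \<Rightarrow> (nat \<Rightarrow> nat \<Rightarrow> int) \<Rightarrow> bool" where
  "in_Dns n A \<longleftrightarrow> sidigraph n A \<and> underlying_connected n A \<and>
     card (dcycles A) = 2 \<and>
     (\<forall>c1\<in>dcycles A. \<forall>c2\<in>dcycles A. c1 \<noteq> c2 \<longrightarrow> cycle_verts c1 \<inter> cycle_verts c2 = {})"

text \<open>Members of D_n^s whose two directed cycles have length p and sign sp,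
resp. length q and sign sq (e.g. D_n^s[p,q] : sp = sq = 1;
D_n^s[bold p, q] : sp = -1, sq = 1).\<close>
definition Dns_pq :: "nat \<Rightarrow> int \<Rightarrow> nat \<Rightarrow> int \<Rightarrow> nat \<Rightarrow> (nat \<Rightarrow> nat \<Rightarrow> int) \<Rightarrow> bool" where
  "Dns_pq n sp p sq q A \<longleftrightarrow> in_Dns n A \<and>
     (\<exists>c1\<in>dcycles A. \<exists>c2\<in>dcycles A. c1 \<noteq> c2 \<and>
        cycle_len c1 = p \<and> cycle_sign A c1 = sp \<and>
        cycle_len c2 = q \<and> cycle_sign A c2 = sq)"

definition Dns_even_odd :: "nat \<Rightarrow> (nat \<Rightarrow> nat \<Rightarrow> int) \<Rightarrow> bool" where
  "Dns_even_odd n A \<longleftrightarrow> in_Dns n A \<and>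
     (\<exists>c1\<in>dcycles A. \<exists>c2\<in>dcycles A. even (cycle_len c1) \<and> odd (cycle_len c2))"

end

theory Submission
  imports Defs "HOL-Combinatorics.Cycles" "HOL-Analysis.Complex_Transcendental"
begin

definition Gs :: "real \<Rightarrow> nat \<Rightarrow> real" where
  "Gs \<phi> m = (\<Sum>j<m. \<bar>cos (\<phi> + real j * pi / real m)\<bar>)"

lemma dirichlet_cos:
  "2 * sin d * (\<Sum>j<m. cos (t + real j * (2*d))) = sin (t + (2*real m - 1) * d) - sin (t - d)"
proof (induction m)
  case 0 then show ?case by simp
next
  case (Suc m)
  have e: "2 * sin d * cos (t + real m * (2*d)) = sin (t + real m * (2*d) + d) - sin (t + real m * (2*d) - d)"
    by (simp add: sin_add sin_diff)
  have "2 * sin d * (\<Sum>j<Suc m. cos (t + real j * (2*d))) =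
        2 * sin d * (\<Sum>j<m. cos (t + real j * (2*d))) + 2 * sin d * cos (t + real m * (2*d))"
    by (simp add: algebra_simps)
  also have "\<dots> = sin (t + (2*real m - 1) * d) - sin (t - d) + (sin (t + real m * (2*d) + d) - sin (t + real m * (2*d) - d))"
    using Suc e by simp
  also have "t + real m * (2*d) - d = t + (2*real m - 1) * d" by (simp add: algebra_simps)
  also have "t + real m * (2*d) + d = t + (2*real (Suc m) - 1) * d" by (simp add: algebra_simps)
  finally show ?case by simp
qed

lemma sum_lessThan_add_split:
  "(\<Sum>j<m+n. f j) = (\<Sum>j<m. f j) + (\<Sum>j<n. f (m + j))" for f :: "nat \<Rightarrow> 'a::comm_monoid_add"
  by (induct n) (simp_all add: ac_simps)

lemma Gs_shift:
  assumes "m > 0"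
  shows "Gs (\<phi> + pi / real m) m = Gs \<phi> m"
proof -
  define f where "f j = \<bar>cos (\<phi> + real j * pi / real m)\<bar>" for j :: nat
  have 1: "Gs (\<phi> + pi / real m) m = (\<Sum>j<m. f (Suc j))"
  proof -
    have eq: "\<phi> + pi / real m + real j * pi / real m = \<phi> + real (Suc j) * pi / real m" for j
      by (simp add: ring_distribs add_divide_distrib)
    show ?thesis unfolding Gs_def f_def
      by (rule sum.cong[OF refl], rule arg_cong[where f="\<lambda>x. \<bar>cos x\<bar>"], rule eq)
  qed
  have "(\<Sum>j<Suc m. f j) = f 0 + (\<Sum>j<m. f (Suc j))" by (rule sum.lessThan_Suc_shift)
  moreover have "(\<Sum>j<Suc m. f j) = (\<Sum>j<m. f j) + f m" by simp
  moreover have "f m = f 0" using assms unfolding f_def by simp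
  ultimately have "(\<Sum>j<m. f (Suc j)) = (\<Sum>j<m. f j)" by simp
  then show ?thesis using 1 unfolding Gs_def f_def by simp
qed

lemma Gs_shift_nat:
  assumes "m > 0"
  shows "Gs (\<phi> + real k * pi / real m) m = Gs \<phi> m"
proof (induction k)
  case 0 then show ?case by simp
next
  case (Suc k)
  have "\<phi> + real (Suc k) * pi / real m = (\<phi> + real k * pi / real m) + pi / real m"
    by (simp add: ring_distribs add_divide_distrib)
  then have "Gs (\<phi> + real (Suc k) * pi / real m) m = Gs ((\<phi> + real k * pi / real m) + pi / real m) m"
    by (rule arg_cong[where f="\<lambda>x. Gs x m"])
  also have "\<dots> = Gs (\<phi> + real k * pi / real m) m" by (rule Gs_shift[OF assms])
  finally show ?case using Suc by simp
qed

lemma Gs_shift_int: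
  assumes "m > 0"
  shows "Gs (\<phi> + real_of_int k * pi / real m) m = Gs \<phi> m"
proof (cases "k \<ge> 0")
  case True
  have "Gs (\<phi> + real (nat k) * pi / real m) m = Gs \<phi> m" by (rule Gs_shift_nat[OF assms])
  then show ?thesis using True by simp
next
  case False
  then have k: "real_of_int k = - real (nat (-k))" by simp
  have "\<phi> = (\<phi> + real_of_int k * pi / real m) + real (nat (-k)) * pi / real m"
    unfolding k by (simp add: divide_simps)
  then have "Gs \<phi> m = Gs ((\<phi> + real_of_int k * pi / real m) + real (nat (-k)) * pi / real m) m"
    by (rule arg_cong[where f="\<lambda>x. Gs x m"])
  also have "\<dots> = Gs (\<phi> + real_of_int k * pi / real m) m" by (rule Gs_shift_nat[OF assms])
  finally show ?thesis by simp
qed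

lemma Gs_eval:
  assumes m: "m > 0" and l: "- (pi/2) \<le> \<psi>" and u: "\<psi> < - (pi/2) + pi / real m"
  shows "Gs \<psi> m = sin (pi / (2 * real m) - \<psi>) / sin (pi / (2 * real m))"
proof -
  define d where "d = pi / (2 * real m)"
  have d0: "0 < d" using m by (simp add: d_def)
  have d1: "d \<le> pi/2" using m by (simp add: d_def divide_simps)
  have sd: "sin d > 0" using d0 d1 by (intro sin_gt_zero) auto
  have pos: "cos (\<psi> + real j * pi / real m) \<ge> 0" if "j < m" for j
  proof (rule cos_ge_zero)
    have "0 \<le> real j * pi / real m" by simp
    then show "- (pi / 2) \<le> \<psi> + real j * pi / real m" using l by linarith
    have "real j \<le> real m - 1" using that by linarith
    then have "real j * pi / real m \<le> (real m - 1) * pi / real m" using m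
      by (simp add: divide_right_mono)
    also have "\<dots> = pi - pi / real m" using m by (simp add: divide_simps algebra_simps)
    finally have "real j * pi / real m \<le> pi - pi / real m" .
    then show "\<psi> + real j * pi / real m \<le> pi / 2" using u by linarith
  qed
  have jd: "real j * (2*d) = real j * pi / real m" for j
    unfolding d_def using m by simp
  have "Gs \<psi> m = (\<Sum>j<m. cos (\<psi> + real j * (2*d)))"
    unfolding Gs_def jd using pos by (intro sum.cong) auto
  moreover have "2 * sin d * (\<Sum>j<m. cos (\<psi> + real j * (2*d))) = sin (\<psi> + (2*real m - 1) * d) - sin (\<psi> - d)"
    by (rule dirichlet_cos)
  moreover have "(2*real m - 1) * d = pi - d" using m unfolding d_def by (simp add: field_simps)
  then have "\<psi> + (2*real m - 1) * d = (\<psi> - d) + pi" by simp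
  moreover have "sin ((\<psi> - d) + pi) = - sin (\<psi> - d)" by (simp add: sin_add)
  moreover have "- sin (\<psi> - d) = sin (d - \<psi>)" by (metis minus_diff_eq sin_minus)
  ultimately have "2 * sin d * Gs \<psi> m = 2 * sin (d - \<psi>)" by simp
  then have "Gs \<psi> m = sin (d - \<psi>) / sin d" using sd by (simp add: field_simps)
  then show ?thesis unfolding d_def .
qed

lemma Gs_bound:
  assumes m: "m > 0"
  shows "Gs \<phi> m \<le> 1 / sin (pi / (2 * real m))"
proof -
  define h where "h = pi / real m"
  have h0: "h > 0" using m by (simp add: h_def)
  define k where "k = \<lfloor>(\<phi> + pi/2) / h\<rfloor>"
  define \<psi> where "\<psi> = \<phi> - real_of_int k * h"
  have "real_of_int k \<le> (\<phi> + pi/2) / h" unfolding k_def by linarith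
  then have "real_of_int k * h \<le> \<phi> + pi/2" using h0 by (simp add: field_simps)
  then have l: "- (pi/2) \<le> \<psi>" unfolding \<psi>_def by simp
  have "(\<phi> + pi/2) / h < real_of_int k + 1" unfolding k_def by linarith
  then have "\<phi> + pi/2 < real_of_int k * h + h" using h0 by (simp add: field_simps)
  then have u: "\<psi> < - (pi/2) + pi / real m" unfolding \<psi>_def h_def by simp
  have "Gs \<phi> m = Gs (\<psi> + real_of_int k * pi / real m) m" by (simp add: \<psi>_def h_def)
  also have "\<dots> = Gs \<psi> m" by (rule Gs_shift_int[OF m])
  also have "\<dots> = sin (pi / (2 * real m) - \<psi>) / sin (pi / (2 * real m))" by (rule Gs_eval[OF m l u])
  also have "\<dots> \<le> 1 / sin (pi / (2 * real m))"
  proof -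
    have "sin (pi / (2 * real m)) > 0" using m
      by (intro sin_gt_zero) (simp_all add: divide_simps)
    then show ?thesis by (simp add: divide_right_mono)
  qed
  finally show ?thesis .
qed

lemma Gs_odd:
  assumes m: "odd m"
  shows "Gs 0 m = 1 / sin (pi / (2 * real m))"
proof -
  have m0: "m > 0" using m by (cases m) auto
  define k where "k = (m - 1) div 2"
  have k2: "2 * k = m - 1" using m by (simp add: k_def)
  then have "m = 2 * k + 1" using m0 by simp
  then have rk: "real k = (real m - 1) / 2" by simp
  define \<psi> where "\<psi> = - (real k * pi / real m)"
  have \<psi>: "\<psi> = - (pi/2) + pi / (2 * real m)" using m0 unfolding \<psi>_def rk by (simp add: field_simps)
  have "Gs 0 m = Gs (\<psi> + real k * pi / real m) m" by (simp add: \<psi>_def)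
  also have "\<dots> = Gs \<psi> m" by (rule Gs_shift_nat[OF m0])
  also have "\<dots> = sin (pi / (2 * real m) - \<psi>) / sin (pi / (2 * real m))"
  proof (rule Gs_eval[OF m0])
    have a: "pi/(2*real m) > 0" using m0 by simp
    have b: "pi/(2*real m) < pi / real m" using m0 by (simp add: divide_simps)
    show "- (pi / 2) \<le> \<psi>" using a unfolding \<psi> by linarith
    show "\<psi> < - (pi / 2) + pi / real m" using b unfolding \<psi> by linarith
  qed
  also have "sin (pi / (2 * real m) - \<psi>) = 1" by (simp add: \<psi>)
  finally show ?thesis .
qed

definition Fr :: "nat \<Rightarrow> complex \<Rightarrow> real" where
  "Fr k s = (\<Sum>z\<in>{z::complex. z ^ k = s}. \<bar>Re z\<bar>)"

lemma Fr_1: assumes "k > 0"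
  shows "Fr k 1 = (\<Sum>j<k. \<bar>cos (2 * pi * real j / real k)\<bar>)"
  unfolding Fr_def
  using sum.reindex_bij_betw[OF Complex.bij_betw_roots_unity[OF assms], of "\<lambda>z. \<bar>Re z\<bar>"]
  by simp

lemma Fr_m1: assumes k: "k > 0"
  shows "Fr k (-1) = (\<Sum>j<k. \<bar>cos (pi / real k + 2 * pi * real j / real k)\<bar>)"
proof -
  define c where "c = cis (pi / real k)"
  have "c ^ k = cis (real k * (pi / real k))" unfolding c_def by (rule Complex.DeMoivre)
  also have "real k * (pi / real k) = pi" using k by simp
  finally have ck: "c ^ k = -1" by simp
  have c0: "c \<noteq> 0" unfolding c_def by simp
  have b1: "bij_betw (\<lambda>z. c * z) {z::complex. z ^ k = 1} {z. z ^ k = -1}"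
  proof (rule bij_betw_byWitness[where f'="\<lambda>z. z / c"])
    show "\<forall>a\<in>{z::complex. z ^ k = 1}. c * a / c = a" using c0 by simp
    show "\<forall>a\<in>{z::complex. z ^ k = -1}. c * (a / c) = a" using c0 by simp
    show "(*) c ` {z. z ^ k = 1} \<subseteq> {z. z ^ k = - 1}" using ck by (auto simp: power_mult_distrib)
    show "(\<lambda>z. z / c) ` {z. z ^ k = - 1} \<subseteq> {z. z ^ k = 1}" using ck by (auto simp: power_divide)
  qed
  have b: "bij_betw ((\<lambda>z. c * z) \<circ> (\<lambda>j. cis (2 * pi * real j / real k))) {..<k} {z. z ^ k = -1}"
    by (rule bij_betw_trans[OF Complex.bij_betw_roots_unity[OF k] b1])
  have "Fr k (-1) = (\<Sum>j<k. \<bar>Re (c * cis (2 * pi * real j / real k))\<bar>)"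
    unfolding Fr_def using sum.reindex_bij_betw[OF b, of "\<lambda>z. \<bar>Re z\<bar>"] by simp
  also have "\<dots> = (\<Sum>j<k. \<bar>cos (pi / real k + 2 * pi * real j / real k)\<bar>)"
    unfolding c_def by (simp add: cis_mult)
  finally show ?thesis .
qed

lemma sum_even_Gs:
  assumes m: "m > 0"
  shows "(\<Sum>j<2*m. \<bar>cos (\<phi> + 2 * pi * real j / real (2*m))\<bar>) = 2 * Gs \<phi> m"
proof -
  have e: "2 * pi * real j / real (2*m) = real j * pi / real m" for j by simp
  have "(\<Sum>j<2*m. \<bar>cos (\<phi> + 2 * pi * real j / real (2*m))\<bar>) = (\<Sum>j<2*m. \<bar>cos (\<phi> + real j * pi / real m)\<bar>)"
    by (simp only: e)
  also have "\<dots> = (\<Sum>j<m+m. \<bar>cos (\<phi> + real j * pi / real m)\<bar>)"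
    by (simp only: mult_2)
  also have "\<dots> = Gs \<phi> m + (\<Sum>j<m. \<bar>cos (\<phi> + real (m+j) * pi / real m)\<bar>)"
    unfolding sum_lessThan_add_split Gs_def ..
  also have "(\<Sum>j<m. \<bar>cos (\<phi> + real (m+j) * pi / real m)\<bar>) = Gs \<phi> m"
    unfolding Gs_def
  proof (rule sum.cong[OF refl])
    fix j
    have "\<phi> + real (m+j) * pi / real m = (\<phi> + real j * pi / real m) + pi"
      using m by (simp add: field_simps)
    then show "\<bar>cos (\<phi> + real (m+j) * pi / real m)\<bar> = \<bar>cos (\<phi> + real j * pi / real m)\<bar>"
      by (simp add: cos_add)
  qed
  finally show ?thesis by simp
qed

lemma Fr_even_1: "m > 0 \<Longrightarrow> Fr (2*m) 1 = 2 * Gs 0 m"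
  using Fr_1[of "2*m"] sum_even_Gs[of m 0] by simp

lemma Fr_even_m1: "m > 0 \<Longrightarrow> Fr (2*m) (-1) = 2 * Gs (pi / real (2*m)) m"
  using Fr_m1[of "2*m"] sum_even_Gs[of m "pi / real (2*m)"] by simp

lemma Fr_even_bound:
  assumes "m > 0" "s = 1 \<or> s = -1"
  shows "Fr (2*m) s \<le> 2 / sin (pi / real (2*m))"
  using assms Fr_even_1[of m] Fr_even_m1[of m] Gs_bound[of m 0] Gs_bound[of m "pi / real (2*m)"]
  by auto

lemma Fr_odd_neg:
  assumes q: "odd q"
  shows "Fr q (-1) = Fr q 1"
proof -
  have b: "bij_betw uminus {z::complex. z ^ q = 1} {z. z ^ q = -1}"
  proof (rule bij_betw_byWitness[where f'=uminus])
    show "uminus ` {z::complex. z ^ q = 1} \<subseteq> {z. z ^ q = - 1}" using q by auto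
    show "uminus ` {z::complex. z ^ q = -1} \<subseteq> {z. z ^ q = 1}" using q by auto
  qed auto
  show ?thesis unfolding Fr_def using sum.reindex_bij_betw[OF b, of "\<lambda>z. \<bar>Re z\<bar>"] by simp
qed

lemma Fr_double:
  assumes q: "q > 0"
  shows "Fr (2*q) 1 = Fr q 1 + Fr q (-1)"
proof -
  have U: "{z::complex. z ^ (2*q) = 1} = {z. z ^ q = 1} \<union> {z. z ^ q = -1}"
  proof -
    have "z ^ (2*q) = 1 \<longleftrightarrow> z ^ q = 1 \<or> z ^ q = -1" for z :: complex
      by (metis power2_eq_1_iff power_mult power_mult_distrib mult.commute)
    then show ?thesis by auto
  qed
  have f: "finite {z::complex. z ^ (2*q) = 1}" using q by (intro finite_roots_unity) simp
  have f1: "finite {z::complex. z ^ q = 1}" using f U by auto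
  have f2: "finite {z::complex. z ^ q = -1}" using f U by auto
  show ?thesis unfolding Fr_def U
    by (rule sum.union_disjoint[OF f1 f2]) auto
qed

lemma Fr_odd:
  assumes q: "odd q" and s: "s = 1 \<or> s = -1"
  shows "Fr q s = 1 / sin (pi / (2 * real q))"
proof -
  have q0: "q > 0" using q by (cases q) auto
  have "2 * Fr q 1 = Fr (2*q) 1" using Fr_double[OF q0] Fr_odd_neg[OF q] by simp
  also have "\<dots> = 2 * Gs 0 q" by (rule Fr_even_1[OF q0])
  also have "\<dots> = 2 / sin (pi / (2 * real q))" using Gs_odd[OF q] by simp
  finally have "Fr q 1 = 1 / sin (pi / (2 * real q))" by simp
  then show ?thesis using s Fr_odd_neg[OF q] by auto
qed

lemma Fr_2_1: "Fr 2 1 = 2"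
  using Fr_even_1[of 1] by (simp add: Gs_def)

lemma Fr_2_m1: "Fr 2 (-1) = 0"
  using Fr_even_m1[of 1] by (simp add: Gs_def)

lemma Fr_3: "s = 1 \<or> s = -1 \<Longrightarrow> Fr 3 s = 2"
  using Fr_odd[of 3 s] by (simp add: sin_30)

definition Eng :: "complex poly \<Rightarrow> real" where
  "Eng P = (\<Sum>z\<in>{z. poly P z = 0}. real (order z P) * \<bar>Re z\<bar>)"

lemma Eng_superset:
  assumes P: "P \<noteq> 0" and S: "finite S" "{z. poly P z = 0} \<subseteq> S"
  shows "Eng P = (\<Sum>z\<in>S. real (order z P) * \<bar>Re z\<bar>)"
  unfolding Eng_def
  by (rule sum.mono_neutral_left[OF S(1) S(2)]) (auto simp: order_0I)

lemma Eng_mult: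
  assumes P: "P \<noteq> 0" and Q: "Q \<noteq> 0"
  shows "Eng (P * Q) = Eng P + Eng Q"
proof -
  define S where "S = {z. poly (P*Q) z = 0}"
  have PQ: "P * Q \<noteq> 0" using P Q by simp
  have fS: "finite S" unfolding S_def using poly_roots_finite[OF PQ] .
  have "Eng (P*Q) = (\<Sum>z\<in>S. real (order z P) * \<bar>Re z\<bar> + real (order z Q) * \<bar>Re z\<bar>)"
    unfolding Eng_def S_def using order_mult[OF PQ] by (intro sum.cong) (auto simp: algebra_simps)
  also have "\<dots> = (\<Sum>z\<in>S. real (order z P) * \<bar>Re z\<bar>) + (\<Sum>z\<in>S. real (order z Q) * \<bar>Re z\<bar>)"
    by (rule sum.distrib)
  also have "(\<Sum>z\<in>S. real (order z P) * \<bar>Re z\<bar>) = Eng P"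
    by (rule Eng_superset[OF P fS, symmetric]) (auto simp: S_def)
  also have "(\<Sum>z\<in>S. real (order z Q) * \<bar>Re z\<bar>) = Eng Q"
    by (rule Eng_superset[OF Q fS, symmetric]) (auto simp: S_def)
  finally show ?thesis .
qed

lemma Eng_monom: "Eng (monom 1 a) = 0"
  unfolding Eng_def by (rule sum.neutral) (auto simp: poly_monom)

lemma Eng_binom:
  assumes k: "k > 0" and s: "s \<noteq> 0"
  shows "Eng (monom 1 k - [:s:]) = Fr k s"
proof -
  define P where "P = monom 1 k - [:s:]"
  have pz: "poly P z = z ^ k - s" for z unfolding P_def by (simp add: poly_monom)
  have P0: "P \<noteq> 0" proof
    assume "P = 0" then have "poly P 0 = 0" by simp
    then show False using k s by (simp add: pz zero_power)
  qed
  have ord: "order z P = 1" if "z ^ k = s" for z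
  proof -
    have z0: "z \<noteq> 0" using that s k by (auto simp: zero_power)
    have "pderiv P = monom (of_nat k) (k - 1)" unfolding P_def
      by (simp add: pderiv_diff pderiv_monom pderiv_pCons)
    then have "poly (pderiv P) z \<noteq> 0" using z0 k by (simp add: poly_monom)
    then have "order z (pderiv P) = 0" by (rule order_0I)
    moreover have "order z P = Suc (order z (pderiv P))"
      by (rule order_pderiv[OF P0]) (simp add: pz that)
    ultimately show ?thesis by simp
  qed
  have "Eng P = (\<Sum>z\<in>{z. z ^ k = s}. real (order z P) * \<bar>Re z\<bar>)"
    unfolding Eng_def pz by simp
  also have "\<dots> = Fr k s" unfolding Fr_def by (intro sum.cong) (auto simp: ord)
  finally show ?thesis unfolding P_def .
qed

lemma binom_nonzero: "k > 0 \<Longrightarrow> monom (1::complex) k - [:s:] \<noteq> 0"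
proof
  assume "k > 0" "monom (1::complex) k - [:s:] = 0"
  then have "coeff (monom (1::complex) k - [:s:]) k = 0" by simp
  with \<open>k > 0\<close> show False by (simp add: coeff_monom coeff_pCons split: nat.splits)
qed

lemma Eng_prod:
  assumes p: "p > 0" and q: "q > 0" and s1: "s1 \<noteq> 0" and s2: "s2 \<noteq> 0"
  shows "Eng (monom 1 a * (monom 1 p - [:s1:]) * (monom 1 q - [:s2:])) = Fr p s1 + Fr q s2"
proof -
  have m0: "monom (1::complex) a \<noteq> 0" by simp
  have b1: "monom 1 p - [:s1:] \<noteq> 0" by (rule binom_nonzero[OF p])
  have b2: "monom 1 q - [:s2:] \<noteq> 0" by (rule binom_nonzero[OF q])
  have "Eng (monom 1 a * (monom 1 p - [:s1:]) * (monom 1 q - [:s2:]))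
        = Eng (monom 1 a * (monom 1 p - [:s1:])) + Eng (monom 1 q - [:s2:])"
    using m0 b1 b2 by (intro Eng_mult) auto
  also have "Eng (monom 1 a * (monom 1 p - [:s1:])) = Eng (monom 1 a) + Eng (monom 1 p - [:s1:])"
    using m0 b1 by (intro Eng_mult) auto
  finally show ?thesis using Eng_monom Eng_binom[OF p s1] Eng_binom[OF q s2] by simp
qed

lemma sin_lower3: fixes y :: real assumes "0 \<le> y" shows "y - y^3/6 - y^4/24 \<le> sin y"
proof -
  have "\<bar>sin y - (\<Sum>m<4. sin_coeff m * y ^ m)\<bar> \<le> inverse (fact 4) * \<bar>y\<bar> ^ 4"
    by (rule Maclaurin_sin_bound)
  moreover have "(\<Sum>m<4. sin_coeff m * y ^ m) = y - y^3/6"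
  proof -
    have e: "{..<4::nat} = {0,1,2,3}" by auto
    have c: "sin_coeff 0 = 0" "sin_coeff 1 = 1" "sin_coeff (Suc 0) = 1" "sin_coeff 2 = 0" "sin_coeff 3 = -1/6"
      by (simp_all add: sin_coeff_def fact_numeral)
    show ?thesis unfolding e by (simp add: c)
  qed
  moreover have "inverse (fact 4) * \<bar>y\<bar> ^ 4 = y^4/24" using assms
    by (simp add: fact_numeral)
  ultimately show ?thesis by linarith
qed

lemma csc_upper:
  assumes y0: "0 < y" and y1: "y \<le> pi / 4"
  shows "1 / sin y \<le> 1 / y + 1/5"
proof -
  have "pi \<le> 63/20" using pi_approx by simp
  then have yb: "y \<le> 79/100" using y1 by linarith
  have "y^2 \<le> (79/100)^2" using yb y0 by (intro power_mono) auto
  then have y2: "y^2 \<le> 6241/10000" by (simp add: power2_eq_square)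
  have "y^3 \<le> (79/100)^3" using yb y0 by (intro power_mono) auto
  then have y3: "y^3 \<le> 493039/1000000" by (simp add: power3_eq_cube)
  have h: "0 \<le> 1 - 5*y/6 - 3*y^2/8 - y^3/24" using yb y2 y3 by linarith
  have "0 \<le> y^2 * (1 - 5*y/6 - 3*y^2/8 - y^3/24)" using h by simp
  moreover have "(y - y^3/6 - y^4/24) * (5 + y) - 5 * y = y^2 * (1 - 5*y/6 - 3*y^2/8 - y^3/24)"
    by (simp add: field_simps eval_nat_numeral)
  ultimately have "5 * y \<le> (y - y^3/6 - y^4/24) * (5 + y)" by linarith
  also have "\<dots> \<le> sin y * (5 + y)" using sin_lower3[of y] y0 by (intro mult_right_mono) auto
  finally have k: "5 * y \<le> sin y * (5 + y)" .
  have sp: "sin y > 0" using y0 y1 pi_approx by (intro sin_gt_zero) auto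
  have "1 / sin y \<le> (5 + y) / (5 * y)" using k sp y0 by (simp add: divide_simps algebra_simps)
  also have "\<dots> = 1 / y + 1/5" using y0 by (simp add: field_simps)
  finally show ?thesis .
qed

lemma csc_lower:
  assumes y0: "0 < y" and y1: "y < pi"
  shows "1 / y \<le> 1 / sin y"
proof -
  have sp: "sin y > 0" using y0 y1 by (intro sin_gt_zero) auto
  have "sin y \<le> y" using y0 by (intro sin_x_le_x) auto
  then show ?thesis using sp by (intro divide_left_mono) auto
qed

lemma main_ineq:
  fixes p q n :: nat
  assumes p: "4 \<le> p" and q: "3 \<le> q" and pq: "p + q \<le> n"
  shows "2 / sin (pi / real p) + 1 / sin (pi / (2 * real q)) \<le> 2 + 1 / sin (pi / (2 * real (n - 2)))"
proof -
  have rp: "real p \<ge> 4" using p by simp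
  have rq: "real q \<ge> 3" using q by simp
  have rn: "real (n - 2) = real n - 2" using p q pq by simp
  have rn2: "real n - 2 \<ge> 5" using p q pq by simp
  have pp: "pi > 3" by (rule pi_gt3)
  have a: "1 / sin (pi / real p) \<le> real p / pi + 1/5"
  proof -
    have "pi / real p \<le> pi / 4" using rp by (intro divide_left_mono) auto
    then have "1 / sin (pi / real p) \<le> 1 / (pi / real p) + 1/5" using rp by (intro csc_upper) auto
    then show ?thesis by simp
  qed
  have b: "1 / sin (pi / (2 * real q)) \<le> 2 * real q / pi + 1/5"
  proof -
    have "pi / (2 * real q) \<le> pi / 4" using rq by (intro divide_left_mono) auto
    then have "1 / sin (pi / (2 * real q)) \<le> 1 / (pi / (2 * real q)) + 1/5" using rq by (intro csc_upper) auto
    then show ?thesis by simp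
  qed
  have c: "2 * (real n - 2) / pi \<le> 1 / sin (pi / (2 * real (n - 2)))"
  proof -
    have "pi / (2 * real (n - 2)) < pi" using rn rn2 by (simp add: divide_simps)
    then have "1 / (pi / (2 * real (n - 2))) \<le> 1 / sin (pi / (2 * real (n - 2)))"
      using rn rn2 by (intro csc_lower) auto
    then show ?thesis using rn by simp
  qed
  have d: "real p + real q \<le> real n" using pq by simp
  have "2 * (real p / pi) + 2 * real q / pi \<le> 2 * real n / pi" using d
    by (simp add: divide_right_mono add_divide_distrib[symmetric])
  moreover have "4 / pi \<le> 7/5" using pp by (simp add: divide_simps)
  moreover have "2 * (real n - 2) / pi = 2 * real n / pi - 4 / pi" by (simp add: field_simps)
  ultimately show ?thesis using a b c by linarith
qed

lemma odd_mono:
  fixes q m :: nat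
  assumes q: "1 \<le> q" and qm: "q \<le> m"
  shows "1 / sin (pi / (2 * real q)) \<le> 1 / sin (pi / (2 * real m))"
proof -
  have a1: "0 < pi / (2 * real m)" using q qm by simp
  have a2: "pi / (2 * real m) \<le> pi / (2 * real q)" using q qm by (intro divide_left_mono) auto
  have a3: "pi / (2 * real q) \<le> pi / 2" using q by (intro divide_left_mono) auto
  have s1: "sin (pi / (2 * real m)) \<le> sin (pi / (2 * real q))"
    using a1 a2 a3 by (intro sin_monotone_2pi_le) auto
  have s0: "sin (pi / (2 * real m)) > 0" using a1 a2 a3 by (intro sin_gt_zero) auto
  show ?thesis using s1 s0 by (intro divide_left_mono) auto
qed

lemma sidigraph_arc: "sidigraph n A \<Longrightarrow> A i j \<noteq> 0 \<Longrightarrow> i < n \<and> j < n \<and> i \<noteq> j"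
  unfolding sidigraph_def by blast

lemma sidigraph_diag: "sidigraph n A \<Longrightarrow> A i i = 0"
  unfolding sidigraph_def by blast

definition ent :: "(nat \<Rightarrow> nat \<Rightarrow> int) \<Rightarrow> nat \<Rightarrow> nat \<Rightarrow> complex poly" where
  "ent A i j = (if i = j then [:0,1:] else [:- complex_of_int (A i j):])"

lemma char_poly_adj:
  assumes sd: "sidigraph n A"
  shows "char_poly (adj_mat n A) =
     (\<Sum>p\<in>{p. p permutes {0..<n}}. of_int (sign p) * (\<Prod>i = 0..<n. ent A i (p i)))"
proof -
  have c: "char_poly_matrix (adj_mat n A) \<in> carrier_mat n n"
    unfolding adj_mat_def by simp
  have e: "char_poly_matrix (adj_mat n A) $$ (i, j) = ent A i j" if "i < n" "j < n" for i j
    using that sidigraph_diag[OF sd, of i]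
    unfolding char_poly_matrix_def adj_mat_def ent_def by auto
  show ?thesis unfolding char_poly_def det_def'[OF c]
  proof (rule sum.cong[OF refl])
    fix p assume "p \<in> {p. p permutes {0..<n}}"
    then have "p i < n" if "i < n" for i using that permutes_in_image by fastforce
    then show "signof p * (\<Prod>i = 0..<n. char_poly_matrix (adj_mat n A) $$ (i, p i)) =
               of_int (sign p) * (\<Prod>i = 0..<n. ent A i (p i))"
      by (auto simp: e intro!: prod.cong)
  qed
qed

lemma orbit_cycle:
  assumes sd: "sidigraph n A" and perm: "\<pi> permutes {0..<n}"
    and good: "\<forall>i<n. \<pi> i \<noteq> i \<longrightarrow> A i (\<pi> i) \<noteq> 0" and a: "\<pi> a \<noteq> a"
  shows "\<exists>c\<in>dcycles A. a \<in> cycle_verts c \<and> (\<forall>e\<in>c. \<pi> (fst e) = snd e)"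
proof -
  have pp: "permutation \<pi>" using perm by (rule permutes_imp_permutation[rotated]) simp
  define L where "L = least_power \<pi> a"
  define vs where "vs = support \<pi> a"
  have L: "(\<pi> ^^ L) a = a" "L > 0" unfolding L_def using least_power_of_permutation[OF pp] by auto
  have L2: "L > 1" unfolding L_def using least_power_gt_one[OF pp a] by simp
  have dvs: "distinct vs" unfolding vs_def by (rule cycle_of_permutation[OF pp])
  have lvs: "length vs = L" unfolding vs_def L_def by simp
  have nth: "vs ! i = (\<pi> ^^ i) a" if "i < L" for i
    using that unfolding vs_def L_def by simp
  have an: "a < n" using a permutes_not_in[OF perm, of a] by auto
  have inn: "(\<pi> ^^ i) a < n" for i
    using permutes_in_image[OF permutes_funpow[OF perm, of i], of a] an by simp
  have inj: "inj (\<pi> ^^ i)" for i by (rule permutes_inj[OF permutes_funpow[OF perm]])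
  have mv: "\<pi> ((\<pi> ^^ i) a) \<noteq> (\<pi> ^^ i) a" for i
  proof
    assume "\<pi> ((\<pi> ^^ i) a) = (\<pi> ^^ i) a"
    then have "(\<pi> ^^ i) (\<pi> a) = (\<pi> ^^ i) a" by (metis funpow_swap1)
    then show False using a inj[of i] by (auto dest: injD)
  qed
  have nxt: "vs ! ((i + 1) mod L) = \<pi> (vs ! i)" if "i < L" for i
  proof (cases "i + 1 < L")
    case True then show ?thesis using nth that by simp
  next
    case False
    then have "i + 1 = L" using that by simp
    then have "\<pi> (vs ! i) = (\<pi> ^^ L) a" using nth[OF that] by (metis funpow.simps(2) o_apply Suc_eq_plus1)
    then show ?thesis using L \<open>i + 1 = L\<close> nth[of 0] by simp
  qed
  have cl: "cycle_list A vs"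
    unfolding cycle_list_def
  proof (intro conjI allI impI)
    show "2 \<le> length vs" using L2 lvs by simp
    show "distinct vs" by (rule dvs)
    fix i assume "i < length vs"
    then have i: "i < L" using lvs by simp
    show "A (vs ! i) (vs ! ((i + 1) mod length vs)) \<noteq> 0"
      using good inn[of i] mv[of i] nth[OF i] nxt[OF i] lvs by simp
  qed
  define c where "c = cycle_arcs vs"
  have "c \<in> dcycles A" unfolding dcycles_def c_def using cl by blast
  moreover have "a \<in> cycle_verts c"
  proof -
    have "(vs ! 0, vs ! ((0 + 1) mod length vs)) \<in> c" unfolding c_def cycle_arcs_def using L lvs by blast
    moreover have "vs ! 0 = a" using nth[of 0] L by simp
    ultimately show ?thesis unfolding cycle_verts_def by force
  qed
  moreover have "\<forall>e\<in>c. \<pi> (fst e) = snd e"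
    unfolding c_def cycle_arcs_def using nxt lvs by auto
  ultimately show ?thesis by blast
qed

lemma cyc_next:
  assumes "distinct vs" "i < length vs"
  shows "cycle_of_list vs (vs ! i) = vs ! ((i + 1) mod length vs)"
proof -
  have "map (cycle_of_list vs ^^ 1) vs = rotate 1 vs" by (rule cyclic_rotation[OF assms(1)])
  then have "(map (cycle_of_list vs) vs) ! i = rotate 1 vs ! i" by simp
  then show ?thesis using assms(2) by (simp add: nth_rotate1)
qed

lemma cyc_arcs_eq:
  assumes "distinct vs"
  shows "cycle_arcs vs = (\<lambda>x. (x, cycle_of_list vs x)) ` set vs"
proof (rule subset_antisym; rule subsetI)
  fix e assume "e \<in> cycle_arcs vs"
  then obtain i where i: "i < length vs" "e = (vs ! i, vs ! ((i + 1) mod length vs))"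
    unfolding cycle_arcs_def by auto
  then have "e = (\<lambda>x. (x, cycle_of_list vs x)) (vs ! i)" using cyc_next[OF assms i(1)] by simp
  moreover have "vs ! i \<in> set vs" using i by simp
  ultimately show "e \<in> (\<lambda>x. (x, cycle_of_list vs x)) ` set vs" by blast
next
  fix e assume "e \<in> (\<lambda>x. (x, cycle_of_list vs x)) ` set vs"
  then obtain x where x: "x \<in> set vs" "e = (x, cycle_of_list vs x)" by auto
  then obtain i where i: "i < length vs" "x = vs ! i" by (auto simp: in_set_conv_nth)
  then have "e = (vs ! i, vs ! ((i + 1) mod length vs))" using cyc_next[OF assms i(1)] x by simp
  then show "e \<in> cycle_arcs vs" unfolding cycle_arcs_def using i by blast
qed

lemma cyc_verts: "distinct vs \<Longrightarrow> cycle_verts (cycle_arcs vs) = set vs"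
  unfolding cycle_verts_def by (simp add: cyc_arcs_eq image_image)

lemma cyc_card: "distinct vs \<Longrightarrow> card (cycle_arcs vs) = length vs"
  by (simp add: cyc_arcs_eq card_image inj_on_def distinct_card)

lemma cyc_moves:
  assumes "distinct vs" "length vs \<ge> 2" "x \<in> set vs"
  shows "cycle_of_list vs x \<noteq> x"
proof -
  obtain i where i: "i < length vs" "x = vs ! i" using assms(3) by (auto simp: in_set_conv_nth)
  have "(i + 1) mod length vs \<noteq> i"
  proof (cases "i + 1 < length vs")
    case True then show ?thesis by simp
  next
    case False then have "i + 1 = length vs" using i by simp
    then show ?thesis using assms(2) by simp
  qed
  moreover have "(i + 1) mod length vs < length vs" by (rule mod_less_divisor) (use i in auto)
  ultimately have "vs ! ((i + 1) mod length vs) \<noteq> vs ! i"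
    using assms(1) i by (simp add: nth_eq_iff_index_eq)
  then show ?thesis using cyc_next[OF assms(1) i(1)] i by simp
qed

lemma sign_cyc: "distinct vs \<Longrightarrow> sign (cycle_of_list vs) = (-1) ^ (length vs - 1)"
proof (induction vs rule: cycle_of_list.induct)
  case (1 i j cs)
  then have ij: "i \<noteq> j" by auto
  have "sign (cycle_of_list (i # j # cs)) = sign (Transposition.transpose i j) * sign (cycle_of_list (j # cs))"
    by (simp add: sign_compose permutation_of_cycle permutation_swap_id)
  also have "\<dots> = - ((-1) ^ (length (j # cs) - 1))" using 1 ij by (simp add: sign_swap_id)
  also have "\<dots> = (-1) ^ (length (i # j # cs) - 1)" by simp
  finally show ?case .
next
  case "2_1" then show ?case by (simp add: sign_id)
next
  case ("2_2" v) then show ?case by (simp add: sign_id)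
qed

lemma cyc_in_range:
  assumes "sidigraph n A" "cycle_list A vs"
  shows "set vs \<subseteq> {0..<n}"
proof
  fix x assume "x \<in> set vs"
  then obtain i where i: "i < length vs" "x = vs ! i" by (auto simp: in_set_conv_nth)
  then have "A x (vs ! ((i + 1) mod length vs)) \<noteq> 0" using assms(2) unfolding cycle_list_def by auto
  then show "x \<in> {0..<n}" using sidigraph_arc[OF assms(1)] by auto
qed

lemma cyc_sign_pm:
  assumes "sidigraph n A" "cycle_list A vs"
  shows "cycle_sign A (cycle_arcs vs) = 1 \<or> cycle_sign A (cycle_arcs vs) = -1"
proof -
  have v: "A i j \<in> {-1, 1}" if "(i, j) \<in> cycle_arcs vs" for i j
  proof -
    from that obtain k where k: "k < length vs" "i = vs ! k" "j = vs ! ((k + 1) mod length vs)"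
      unfolding cycle_arcs_def by auto
    then have "A i j \<noteq> 0" using assms(2) unfolding cycle_list_def by auto
    moreover have "A i j \<in> {-1, 0, 1}" using assms(1) unfolding sidigraph_def by blast
    ultimately show ?thesis by auto
  qed
  have "\<bar>cycle_sign A (cycle_arcs vs)\<bar> = (\<Prod>(i, j)\<in>cycle_arcs vs. \<bar>A i j\<bar>)"
    unfolding cycle_sign_def abs_prod by (simp add: case_prod_unfold)
  also have "\<dots> = 1"
  proof (rule prod.neutral, rule ballI)
    fix e assume e: "e \<in> cycle_arcs vs"
    obtain i j where ij: "e = (i, j)" by force
    have "A i j \<in> {-1, 1}" using v e ij by simp
    then have "\<bar>A i j\<bar> = 1" by auto
    then show "(case e of (i, j) \<Rightarrow> \<bar>A i j\<bar>) = 1" using ij by simp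
  qed
  finally show ?thesis by auto
qed

lemma X_monom: "[:0, 1:] = (monom 1 1 :: complex poly)"
  by (simp add: monom_Suc)

lemma const_poly_prod: "finite S \<Longrightarrow> (\<Prod>e\<in>S. [:f e:]) = [:(\<Prod>e\<in>S. f e):]"
  by (induct rule: finite_induct) (auto simp: mult_to_poly mult.commute)

lemma prod_ent_split:
  assumes V: "V \<subseteq> {0..<n}" and mv: "\<forall>x\<in>V. \<tau> x \<noteq> x" and fx: "\<forall>x. x \<notin> V \<longrightarrow> \<tau> x = x"
  shows "(\<Prod>i = 0..<n. ent A i (\<tau> i)) = monom 1 (n - card V) * (\<Prod>i\<in>V. [:- complex_of_int (A i (\<tau> i)):])"
proof -
  have fin: "finite V" using V finite_subset by blast
  have "{0..<n} = V \<union> ({0..<n} - V)" using V by blast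
  then have "(\<Prod>i = 0..<n. ent A i (\<tau> i)) = (\<Prod>i\<in>V. ent A i (\<tau> i)) * (\<Prod>i\<in>{0..<n} - V. ent A i (\<tau> i))"
    by (metis Diff_disjoint fin finite_Diff finite_atLeastLessThan prod.union_disjoint)
  also have "(\<Prod>i\<in>V. ent A i (\<tau> i)) = (\<Prod>i\<in>V. [:- complex_of_int (A i (\<tau> i)):])"
    using mv by (intro prod.cong) (auto simp: ent_def)
  also have "(\<Prod>i\<in>{0..<n} - V. ent A i (\<tau> i)) = (\<Prod>i\<in>{0..<n} - V. monom 1 1)"
    using fx by (intro prod.cong) (auto simp: ent_def X_monom)
  also have "\<dots> = monom 1 1 ^ card ({0..<n} - V)" by simp
  also have "\<dots> = monom 1 (card ({0..<n} - V))" by (rule x_pow_n)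
  also have "card ({0..<n} - V) = n - card V" using V fin by (simp add: card_Diff_subset)
  finally show ?thesis by (simp only: mult.commute)
qed

lemma cyc_prod:
  assumes "distinct vs"
  shows "(\<Prod>i\<in>set vs. [:- complex_of_int (A i (cycle_of_list vs i)):]) =
         [:(-1) ^ length vs * complex_of_int (cycle_sign A (cycle_arcs vs)):]"
proof -
  have inj: "inj_on (\<lambda>x. (x, cycle_of_list vs x)) (set vs)" by (auto simp: inj_on_def)
  have "(\<Prod>i\<in>set vs. [:- complex_of_int (A i (cycle_of_list vs i)):]) =
        (\<Prod>e\<in>cycle_arcs vs. [:- complex_of_int (A (fst e) (snd e)):])"
    unfolding cyc_arcs_eq[OF assms] prod.reindex[OF inj] by simp
  also have "\<dots> = [:(\<Prod>e\<in>cycle_arcs vs. - complex_of_int (A (fst e) (snd e))):]"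
    by (rule const_poly_prod) (simp add: cyc_arcs_eq[OF assms])
  also have "(\<Prod>e\<in>cycle_arcs vs. - complex_of_int (A (fst e) (snd e))) =
             (-1) ^ card (cycle_arcs vs) * (\<Prod>e\<in>cycle_arcs vs. complex_of_int (A (fst e) (snd e)))"
    by (rule prod_uminus)
  also have "(\<Prod>e\<in>cycle_arcs vs. complex_of_int (A (fst e) (snd e))) = complex_of_int (cycle_sign A (cycle_arcs vs))"
    unfolding cycle_sign_def by (simp add: case_prod_unfold)
  finally show ?thesis using cyc_card[OF assms] by simp
qed

locale twocyc =
  fixes n :: nat and A :: "nat \<Rightarrow> nat \<Rightarrow> int" and vs1 vs2 :: "nat list"
  assumes sd: "sidigraph n A"
    and cl1: "cycle_list A vs1" and cl2: "cycle_list A vs2"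
    and dc: "dcycles A = {cycle_arcs vs1, cycle_arcs vs2}"
    and disj: "set vs1 \<inter> set vs2 = {}"
begin

abbreviation "s1 \<equiv> cycle_of_list vs1"
abbreviation "s2 \<equiv> cycle_of_list vs2"

lemma d1: "distinct vs1" and d2: "distinct vs2" and l1: "length vs1 \<ge> 2" and l2: "length vs2 \<ge> 2"
  using cl1 cl2 unfolding cycle_list_def by auto

lemma r1: "set vs1 \<subseteq> {0..<n}" and r2: "set vs2 \<subseteq> {0..<n}"
  using cyc_in_range[OF sd cl1] cyc_in_range[OF sd cl2] by auto

lemma verts1: "cycle_verts (cycle_arcs vs1) = set vs1" and verts2: "cycle_verts (cycle_arcs vs2) = set vs2"
  using cyc_verts[OF d1] cyc_verts[OF d2] by auto

lemma classify:
  assumes perm: "\<pi> permutes {0..<n}" and good: "\<forall>i<n. \<pi> i \<noteq> i \<longrightarrow> A i (\<pi> i) \<noteq> 0"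
  shows "\<pi> \<in> {id, s1, s2, s1 \<circ> s2}"
proof -
  have moved: "x \<in> set vs1 \<or> x \<in> set vs2" if "\<pi> x \<noteq> x" for x
    using orbit_cycle[OF sd perm good that] dc verts1 verts2 by auto
  have alt1: "(\<forall>x\<in>set vs1. \<pi> x = s1 x) \<or> (\<forall>x\<in>set vs1. \<pi> x = x)"
  proof (rule ccontr)
    assume "\<not> ?thesis"
    then obtain x y where x: "x \<in> set vs1" "\<pi> x \<noteq> s1 x" and y: "y \<in> set vs1" "\<pi> y \<noteq> y" by auto
    obtain c where c: "c \<in> dcycles A" "y \<in> cycle_verts c" "\<forall>e\<in>c. \<pi> (fst e) = snd e"
      using orbit_cycle[OF sd perm good y(2)] by blast
    have "c = cycle_arcs vs1" using c(1,2) dc verts2 y(1) disj by auto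
    then have "(x, s1 x) \<in> c" using cyc_arcs_eq[OF d1] x(1) by auto
    then show False using c(3) x(2) by auto
  qed
  have alt2: "(\<forall>x\<in>set vs2. \<pi> x = s2 x) \<or> (\<forall>x\<in>set vs2. \<pi> x = x)"
  proof (rule ccontr)
    assume "\<not> ?thesis"
    then obtain x y where x: "x \<in> set vs2" "\<pi> x \<noteq> s2 x" and y: "y \<in> set vs2" "\<pi> y \<noteq> y" by auto
    obtain c where c: "c \<in> dcycles A" "y \<in> cycle_verts c" "\<forall>e\<in>c. \<pi> (fst e) = snd e"
      using orbit_cycle[OF sd perm good y(2)] by blast
    have "c = cycle_arcs vs2" using c(1,2) dc verts1 y(1) disj by auto
    then have "(x, s2 x) \<in> c" using cyc_arcs_eq[OF d2] x(1) by auto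
    then show False using c(3) x(2) by auto
  qed
  have o1: "s1 x = x" if "x \<notin> set vs1" for x using that by (rule id_outside_supp)
  have o2: "s2 x = x" if "x \<notin> set vs2" for x using that by (rule id_outside_supp)
  have i2: "s2 x \<in> set vs2" if "x \<in> set vs2" for x
    using permutes_in_image[OF cycle_permutes[of vs2]] that by simp
  have c12: "s1 (s2 x) = s2 x" if "x \<in> set vs2" for x
  proof -
    have "s2 x \<notin> set vs1" using i2[OF that] disj by blast
    then show ?thesis by (rule o1)
  qed
  have out: "\<pi> x = x" if "x \<notin> set vs1" "x \<notin> set vs2" for x using moved that by blast
  from alt1 alt2 show ?thesis
  proof (elim disjE)
    assume a1: "\<forall>x\<in>set vs1. \<pi> x = s1 x" and a2: "\<forall>x\<in>set vs2. \<pi> x = s2 x"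
    have "\<pi> = s1 \<circ> s2"
    proof
      fix x show "\<pi> x = (s1 \<circ> s2) x"
        using a1 a2 o1 o2 c12 out disj by (cases "x \<in> set vs1"; cases "x \<in> set vs2") auto
    qed
    then show ?thesis by simp
  next
    assume a1: "\<forall>x\<in>set vs1. \<pi> x = s1 x" and a2: "\<forall>x\<in>set vs2. \<pi> x = x"
    have "\<pi> = s1"
    proof
      fix x show "\<pi> x = s1 x"
        using a1 a2 o1 out disj by (cases "x \<in> set vs1"; cases "x \<in> set vs2") auto
    qed
    then show ?thesis by simp
  next
    assume a1: "\<forall>x\<in>set vs1. \<pi> x = x" and a2: "\<forall>x\<in>set vs2. \<pi> x = s2 x"
    have "\<pi> = s2"
    proof
      fix x show "\<pi> x = s2 x"
        using a1 a2 o2 out disj by (cases "x \<in> set vs1"; cases "x \<in> set vs2") auto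
    qed
    then show ?thesis by simp
  next
    assume a1: "\<forall>x\<in>set vs1. \<pi> x = x" and a2: "\<forall>x\<in>set vs2. \<pi> x = x"
    have "\<pi> = id"
    proof
      fix x show "\<pi> x = id x"
        using a1 a2 out by (cases "x \<in> set vs1"; cases "x \<in> set vs2") auto
    qed
    then show ?thesis by simp
  qed
qed

end

lemma sgn_const: "p \<ge> 1 \<Longrightarrow> (of_int ((-1) ^ (p - 1)) :: complex poly) * [:(-1) ^ p * c:] = - [:c:]"
proof (cases p)
  case (Suc k)
  have pw: "(-1 :: complex poly) ^ k = [:(-1) ^ k:]" for k
    by (induct k) (auto simp: one_pCons)
  have "(of_int ((-1) ^ k) :: complex poly) = [:(-1) ^ k:]" by (simp add: pw)
  then show ?thesis using Suc by (simp add: mult_to_poly)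
qed simp

lemma final_alg:
  fixes c1 c2 :: complex
  assumes p: "p \<ge> 1" and q: "q \<ge> 1"
  shows "monom 1 (a+p+q)
       + of_int ((-1) ^ (p-1)) * (monom 1 (a+q) * [:(-1)^p*c1:])
       + of_int ((-1) ^ (q-1)) * (monom 1 (a+p) * [:(-1)^q*c2:])
       + of_int ((-1) ^ (p-1) * (-1) ^ (q-1)) * (monom 1 a * ([:(-1)^p*c1:] * [:(-1)^q*c2:]))
     = monom 1 a * (monom 1 p - [:c1:]) * (monom 1 q - [:c2:])"
proof -
  have e1: "of_int ((-1) ^ (p-1)) * (monom 1 (a+q) * [:(-1)^p*c1:]) = - (monom 1 (a+q) * [:c1:])"
    using sgn_const[OF p, of c1] by (metis mult.left_commute mult_minus_right)
  have e2: "of_int ((-1) ^ (q-1)) * (monom 1 (a+p) * [:(-1)^q*c2:]) = - (monom 1 (a+p) * [:c2:])"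
    using sgn_const[OF q, of c2] by (metis mult.left_commute mult_minus_right)
  have e3: "of_int ((-1) ^ (p-1) * (-1) ^ (q-1)) * (monom 1 a * ([:(-1)^p*c1:] * [:(-1)^q*c2:]))
            = monom 1 a * ((of_int ((-1) ^ (p-1)) * [:(-1)^p*c1:]) * (of_int ((-1) ^ (q-1)) * [:(-1)^q*c2:]))"
    by (simp add: algebra_simps)
  also have "\<dots> = monom 1 a * [:c1:] * [:c2:]" using sgn_const[OF p, of c1] sgn_const[OF q, of c2] by simp
  finally have e3': "of_int ((-1) ^ (p-1) * (-1) ^ (q-1)) * (monom 1 a * ([:(-1)^p*c1:] * [:(-1)^q*c2:])) = monom 1 a * [:c1:] * [:c2:]" .
  have m: "monom (1::complex) (a+p+q) = monom 1 a * monom 1 p * monom 1 q"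
          "monom (1::complex) (a+q) = monom 1 a * monom 1 q"
          "monom (1::complex) (a+p) = monom 1 a * monom 1 p"
    by (simp_all add: mult_monom)
  show ?thesis unfolding e1 e2 e3' unfolding m by (simp add: algebra_simps)
qed

context twocyc begin

theorem charpoly_two:
  "char_poly (adj_mat n A) =
     monom 1 (n - length vs1 - length vs2)
     * (monom 1 (length vs1) - [:complex_of_int (cycle_sign A (cycle_arcs vs1)):])
     * (monom 1 (length vs2) - [:complex_of_int (cycle_sign A (cycle_arcs vs2)):])"
proof -
  define p where "p = length vs1"
  define q where "q = length vs2"
  define c1 where "c1 = complex_of_int (cycle_sign A (cycle_arcs vs1))"
  define c2 where "c2 = complex_of_int (cycle_sign A (cycle_arcs vs2))"
  define T where "T \<pi> = (of_int (sign \<pi>) :: complex poly) * (\<Prod>i = 0..<n. ent A i (\<pi> i))" for \<pi>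
  define P where "P = {\<pi>. \<pi> permutes {0..<n}}"
  have cpv1: "card (set vs1) = p" unfolding p_def using d1 by (simp add: distinct_card)
  have cpv2: "card (set vs2) = q" unfolding q_def using d2 by (simp add: distinct_card)
  have pqn: "p + q \<le> n"
  proof -
    have "card (set vs1 \<union> set vs2) \<le> card {0..<n}" using r1 r2 by (intro card_mono) auto
    then show ?thesis using cpv1 cpv2 disj by (simp add: card_Un_disjoint)
  qed
  have perm1: "s1 permutes {0..<n}" by (rule permutes_subset[OF cycle_permutes r1])
  have perm2: "s2 permutes {0..<n}" by (rule permutes_subset[OF cycle_permutes r2])
  have perm12: "s1 \<circ> s2 permutes {0..<n}" by (rule permutes_compose[OF perm2 perm1])
  define F where "F = {id, s1, s2, s1 \<circ> s2}"
  have FP: "F \<subseteq> P" unfolding F_def P_def using perm1 perm2 perm12 permutes_id by auto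
  have finP: "finite P" unfolding P_def by (rule finite_permutations) simp
  have zero: "\<forall>\<pi>\<in>P - F. T \<pi> = 0"
  proof
    fix \<pi> assume pi: "\<pi> \<in> P - F"
    show "T \<pi> = 0"
    proof (rule ccontr)
      assume "T \<pi> \<noteq> 0"
      then have nz: "(\<Prod>i = 0..<n. ent A i (\<pi> i)) \<noteq> 0" unfolding T_def by auto
      have good: "\<forall>i<n. \<pi> i \<noteq> i \<longrightarrow> A i (\<pi> i) \<noteq> 0"
      proof (intro allI impI)
        fix i assume i: "i < n" "\<pi> i \<noteq> i"
        show "A i (\<pi> i) \<noteq> 0"
        proof
          assume "A i (\<pi> i) = 0"
          then have "ent A i (\<pi> i) = 0" using i by (simp add: ent_def)
          then have "(\<Prod>i = 0..<n. ent A i (\<pi> i)) = 0" using i by (intro prod_zero) auto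
          then show False using nz by simp
        qed
      qed
      have "\<pi> \<in> F" unfolding F_def using classify[OF _ good] pi unfolding P_def by auto
      then show False using pi by simp
    qed
  qed
  have cp: "char_poly (adj_mat n A) = (\<Sum>\<pi>\<in>P. T \<pi>)"
    unfolding P_def T_def by (rule char_poly_adj[OF sd])
  also have "\<dots> = (\<Sum>\<pi>\<in>F. T \<pi>)" by (rule sum.mono_neutral_right[OF finP FP zero])
  finally have cpF: "char_poly (adj_mat n A) = (\<Sum>\<pi>\<in>F. T \<pi>)" .
  define x1 where "x1 = vs1 ! 0"
  define x2 where "x2 = vs2 ! 0"
  have x1: "x1 \<in> set vs1" unfolding x1_def by (rule nth_mem) (use l1 in linarith)
  have x2: "x2 \<in> set vs2" unfolding x2_def by (rule nth_mem) (use l2 in linarith)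
  have mv1: "s1 x \<noteq> x" if "x \<in> set vs1" for x using cyc_moves[OF d1 l1 that] .
  have mv2: "s2 x \<noteq> x" if "x \<in> set vs2" for x using cyc_moves[OF d2 l2 that] .
  have fx1: "s1 x = x" if "x \<notin> set vs1" for x using that by (rule id_outside_supp)
  have fx2: "s2 x = x" if "x \<notin> set vs2" for x using that by (rule id_outside_supp)
  have i2: "s2 x \<in> set vs2" if "x \<in> set vs2" for x
    using permutes_in_image[OF cycle_permutes[of vs2]] that by simp
  have c12: "(s1 \<circ> s2) x = s2 x" if "x \<in> set vs2" for x
  proof -
    have "s2 x \<notin> set vs1" using i2[OF that] disj by blast
    then show ?thesis by (simp add: fx1)
  qed
  have c11: "(s1 \<circ> s2) x = s1 x" if "x \<in> set vs1" for x
  proof -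
    have "x \<notin> set vs2" using that disj by blast
    then show ?thesis by (simp add: fx2)
  qed
  have x1n2: "x1 \<notin> set vs2" and x2n1: "x2 \<notin> set vs1" using x1 x2 disj by blast+
  have ne1: "id \<noteq> s1" using mv1[OF x1] by (metis id_apply)
  have ne2: "id \<noteq> s2" using mv2[OF x2] by (metis id_apply)
  have ne3: "id \<noteq> s1 \<circ> s2" using mv1[OF x1] c11[OF x1] by (metis id_apply)
  have ne4: "s1 \<noteq> s2" using mv1[OF x1] fx2[OF x1n2] by metis
  have ne5: "s1 \<noteq> s1 \<circ> s2" using mv2[OF x2] c12[OF x2] fx1[OF x2n1] by metis
  have ne6: "s2 \<noteq> s1 \<circ> s2" using mv1[OF x1] c11[OF x1] fx2[OF x1n2] by metis
  have sumF: "(\<Sum>\<pi>\<in>F. T \<pi>) = T id + T s1 + T s2 + T (s1 \<circ> s2)"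
    unfolding F_def using ne1 ne2 ne3 ne4 ne5 ne6 by (simp add: algebra_simps)
  have Tid: "T id = monom 1 n"
  proof -
    have "(\<Prod>i = 0..<n. ent A i (id i)) = monom 1 (n - card {}) * (\<Prod>i\<in>{}. [:- complex_of_int (A i (id i)):])"
      using prod_ent_split[of "{}" n id A] by simp
    then show ?thesis unfolding T_def by (simp add: sign_id)
  qed
  have T1: "T s1 = of_int ((-1) ^ (p-1)) * (monom 1 (n - p) * [:(-1) ^ p * c1:])"
  proof -
    have "(\<Prod>i = 0..<n. ent A i (s1 i)) = monom 1 (n - card (set vs1)) * (\<Prod>i\<in>set vs1. [:- complex_of_int (A i (s1 i)):])"
      by (rule prod_ent_split) (use r1 mv1 fx1 in auto)
    then show ?thesis unfolding T_def using cyc_prod[OF d1, of A] sign_cyc[OF d1] cpv1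
      by (simp add: p_def c1_def)
  qed
  have T2: "T s2 = of_int ((-1) ^ (q-1)) * (monom 1 (n - q) * [:(-1) ^ q * c2:])"
  proof -
    have "(\<Prod>i = 0..<n. ent A i (s2 i)) = monom 1 (n - card (set vs2)) * (\<Prod>i\<in>set vs2. [:- complex_of_int (A i (s2 i)):])"
      by (rule prod_ent_split) (use r2 mv2 fx2 in auto)
    then show ?thesis unfolding T_def using cyc_prod[OF d2, of A] sign_cyc[OF d2] cpv2
      by (simp add: q_def c2_def)
  qed
  have T12: "T (s1 \<circ> s2) = of_int ((-1) ^ (p-1) * (-1) ^ (q-1)) * (monom 1 (n - (p + q)) * ([:(-1) ^ p * c1:] * [:(-1) ^ q * c2:]))"
  proof -
    have "(\<Prod>i = 0..<n. ent A i ((s1 \<circ> s2) i)) = monom 1 (n - card (set vs1 \<union> set vs2)) * (\<Prod>i\<in>set vs1 \<union> set vs2. [:- complex_of_int (A i ((s1 \<circ> s2) i)):])"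
    proof (rule prod_ent_split)
      show "set vs1 \<union> set vs2 \<subseteq> {0..<n}" using r1 r2 by auto
      show "\<forall>x\<in>set vs1 \<union> set vs2. (s1 \<circ> s2) x \<noteq> x" using mv1 mv2 c11 c12 by auto
      show "\<forall>x. x \<notin> set vs1 \<union> set vs2 \<longrightarrow> (s1 \<circ> s2) x = x" using fx1 fx2 by auto
    qed
    also have "card (set vs1 \<union> set vs2) = p + q" using cpv1 cpv2 disj by (simp add: card_Un_disjoint)
    also have "(\<Prod>i\<in>set vs1 \<union> set vs2. [:- complex_of_int (A i ((s1 \<circ> s2) i)):])
       = (\<Prod>i\<in>set vs1. [:- complex_of_int (A i ((s1 \<circ> s2) i)):]) * (\<Prod>i\<in>set vs2. [:- complex_of_int (A i ((s1 \<circ> s2) i)):])"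
      using disj by (intro prod.union_disjoint) auto
    also have "(\<Prod>i\<in>set vs1. [:- complex_of_int (A i ((s1 \<circ> s2) i)):]) = (\<Prod>i\<in>set vs1. [:- complex_of_int (A i (s1 i)):])"
      using c11 by (intro prod.cong) auto
    also have "(\<Prod>i\<in>set vs2. [:- complex_of_int (A i ((s1 \<circ> s2) i)):]) = (\<Prod>i\<in>set vs2. [:- complex_of_int (A i (s2 i)):])"
      using c12 by (intro prod.cong) auto
    finally have pr: "(\<Prod>i = 0..<n. ent A i ((s1 \<circ> s2) i)) = monom 1 (n - (p + q)) * ([:(-1) ^ p * c1:] * [:(-1) ^ q * c2:])"
      using cyc_prod[OF d1, of A] cyc_prod[OF d2, of A] by (simp add: p_def q_def c1_def c2_def)
    have "sign (s1 \<circ> s2) = sign s1 * sign s2" by (simp add: sign_compose permutation_of_cycle)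
    then show ?thesis unfolding T_def pr using sign_cyc[OF d1] sign_cyc[OF d2] by (simp add: p_def q_def)
  qed
  define a where "a = n - p - q"
  have n1: "n = a + p + q" and n2: "n - p = a + q" and n3: "n - q = a + p" and n4: "n - (p + q) = a"
    using pqn unfolding a_def by auto
  have p1: "p \<ge> 1" and q1: "q \<ge> 1" using l1 l2 unfolding p_def q_def by auto
  have "char_poly (adj_mat n A) = monom 1 a * (monom 1 p - [:c1:]) * (monom 1 q - [:c2:])"
    unfolding cpF sumF Tid T1 T2 T12 n2 n3 n4 using final_alg[OF p1 q1, of a c1 c2] n1 by simp
  then show ?thesis unfolding a_def p_def q_def c1_def c2_def .
qed
end

lemma cyc_mono_const:
  fixes f :: "nat \<Rightarrow> nat"
  assumes L: "length vs \<ge> 1" and m: "\<forall>i<length vs. f (vs ! i) \<le> f (vs ! ((i + 1) mod length vs))"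
  shows "\<forall>i<length vs. f (vs ! i) = f (vs ! 0)"
proof -
  let ?L = "length vs"
  have step: "f (vs ! i) \<le> f (vs ! (i+1))" if "i + 1 < ?L" for i
    using m that by (metis Suc_eq_plus1 Suc_lessD mod_less)
  have le: "f (vs ! i) \<le> f (vs ! j)" if "i \<le> j" "j < ?L" for i j
    using that
  proof (induction j)
    case 0 then show ?case by simp
  next
    case (Suc j)
    show ?case
    proof (cases "i = Suc j")
      case True then show ?thesis by simp
    next
      case False
      then have "i \<le> j" using Suc by simp
      then have "f (vs ! i) \<le> f (vs ! j)" using Suc by simp
      also have "\<dots> \<le> f (vs ! (j+1))" using step[of j] Suc by simp
      finally show ?thesis by simp
    qed
  qed
  have wrap: "f (vs ! (?L - 1)) \<le> f (vs ! 0)"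
  proof -
    have "?L - 1 < ?L" using L by simp
    moreover have "?L - 1 + 1 = ?L" using L by simp
    then have "(?L - 1 + 1) mod ?L = 0" by (metis mod_self)
    ultimately show ?thesis using m by metis
  qed
  show ?thesis
  proof (intro allI impI)
    fix i assume i: "i < ?L"
    have "f (vs ! 0) \<le> f (vs ! i)" using le[of 0 i] i by simp
    moreover have "f (vs ! i) \<le> f (vs ! (?L - 1))" using le[of i "?L - 1"] i by simp
    ultimately show "f (vs ! i) = f (vs ! 0)" using wrap by simp
  qed
qed

definition gA :: "nat \<Rightarrow> nat \<Rightarrow> int \<Rightarrow> nat \<Rightarrow> nat \<Rightarrow> int" where
  "gA n q s i j = (if i = 0 \<and> j = 1 then s
     else if (i = 1 \<and> j = 0) \<or> (1 \<le> i \<and> j = i + 1 \<and> j < n) \<or> (i = q + 1 \<and> j = 2) then 1 else 0)"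

definition gsucc :: "nat \<Rightarrow> nat \<Rightarrow> nat" where
  "gsucc q x = (if x = q + 1 then 2 else x + 1)"

definition gf :: "nat \<Rightarrow> nat \<Rightarrow> nat" where
  "gf q i = (if i \<le> 1 then 0 else if i \<le> q + 1 then 1 else i)"

locale gcon =
  fixes n q :: nat and s :: int
  assumes q3: "3 \<le> q" and qn: "q + 2 \<le> n" and s: "s = 1 \<or> s = -1"
begin

abbreviation "A \<equiv> gA n q s"

lemma arc_cases:
  assumes "A i j \<noteq> 0"
  shows "(i = 0 \<and> j = 1) \<or> (i = 1 \<and> j = 0) \<or> (1 \<le> i \<and> j = i + 1 \<and> j < n) \<or> (i = q + 1 \<and> j = 2)"
  using assms unfolding gA_def by (auto split: if_splits)

lemma sidi: "sidigraph n A"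
  unfolding sidigraph_def
proof (rule conjI; intro allI impI)
  fix i j
  show "A i j \<in> {-1, 0, 1}" using s unfolding gA_def by auto
next
  fix i j
  assume "A i j \<noteq> 0"
  then show "i < n \<and> j < n \<and> i \<noteq> j" using arc_cases[of i j] q3 qn by auto
qed

lemma gf_monotone: "i \<le> j \<Longrightarrow> gf q i \<le> gf q j"
  unfolding gf_def using q3 by auto

lemma gf_mono:
  assumes "A i j \<noteq> 0"
  shows "gf q i \<le> gf q j"
proof -
  from arc_cases[OF assms] show ?thesis
  proof (elim disjE)
    assume "i = q + 1 \<and> j = 2" then show ?thesis using q3 by (simp add: gf_def)
  qed (auto intro: gf_monotone simp: gf_def)
qed

lemma gf_eq:
  assumes "A i j \<noteq> 0" "gf q i = gf q j"
  shows "(gf q i = 0 \<and> i \<le> 1 \<and> j \<le> 1) \<or> (gf q i = 1 \<and> 2 \<le> i \<and> i \<le> q + 1 \<and> j = gsucc q i)"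
proof -
  from arc_cases[OF assms(1)] show ?thesis
  proof (elim disjE)
    assume "i = 0 \<and> j = 1" then show ?thesis by (simp add: gf_def)
  next
    assume "i = 1 \<and> j = 0" then show ?thesis by (simp add: gf_def)
  next
    assume a: "1 \<le> i \<and> j = i + 1 \<and> j < n"
    consider "i = 1" | "2 \<le> i \<and> i \<le> q" | "i = q + 1" | "q + 2 \<le> i" using a by linarith
    then show ?thesis
    proof cases
      case 1 then show ?thesis using a assms(2) q3 by (simp add: gf_def)
    next
      case 2 then show ?thesis using a q3 by (simp add: gf_def gsucc_def)
    next
      case 3 then show ?thesis using a assms(2) q3 by (simp add: gf_def)
    next
      case 4 then show ?thesis using a assms(2) q3 by (simp add: gf_def)
    qed
  next
    assume "i = q + 1 \<and> j = 2" then show ?thesis using q3 by (simp add: gf_def gsucc_def)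
  qed
qed

definition C0 :: "(nat \<times> nat) set" where "C0 = cycle_arcs [0, 1]"
definition CB :: "(nat \<times> nat) set" where "CB = cycle_arcs [2..<q+2]"

lemma C0_eq: "C0 = {(0,1), (1,0)}"
proof (rule subset_antisym; rule subsetI)
  fix e assume "e \<in> C0"
  then obtain i where i: "i < length [0,1::nat]" "e = ([0,1::nat] ! i, [0,1::nat] ! ((i + 1) mod length [0,1::nat]))"
    unfolding C0_def cycle_arcs_def by blast
  then have "i = 0 \<or> i = 1" by auto
  then show "e \<in> {(0,1), (1,0)}" using i by auto
next
  fix e assume "e \<in> {(0::nat,1::nat), (1,0)}"
  then have "e = ([0,1::nat] ! 0, [0,1::nat] ! ((0 + 1) mod length [0,1::nat])) \<or> e = ([0,1::nat] ! 1, [0,1::nat] ! ((1 + 1) mod length [0,1::nat]))"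
    by auto
  moreover have "(0::nat) < length [0,1::nat]" "(1::nat) < length [0,1::nat]" by auto
  ultimately show "e \<in> C0" unfolding C0_def cycle_arcs_def by blast
qed

lemma CB_eq: "CB = (\<lambda>x. (x, gsucc q x)) ` {2..q+1}"
proof -
  define bl where "bl = [2..<q+2]"
  have len: "length bl = q" unfolding bl_def using q3 by simp
  have nth: "bl ! k = 2 + k" if "k < q" for k unfolding bl_def using that by (simp del: upt_Suc)
  have dbl: "distinct bl" unfolding bl_def by simp
  have sbl: "set bl = {2..q+1}" unfolding bl_def by auto
  have "cycle_of_list bl x = gsucc q x" if "x \<in> {2..q+1}" for x
  proof -
    define i where "i = x - 2"
    have i: "i < q" "x = 2 + i" using that unfolding i_def by auto
    have cn: "cycle_of_list bl (bl ! i) = bl ! ((i + 1) mod q)"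
      using cyc_next[OF dbl, of i] i len by simp
    show ?thesis
    proof (cases "i + 1 < q")
      case True
      then have "cycle_of_list bl x = 3 + i" using cn nth[of i] nth[of "i+1"] i by simp
      moreover have "gsucc q x = 3 + i" using True i unfolding gsucc_def by simp
      ultimately show ?thesis by simp
    next
      case False
      then have "i + 1 = q" using i by simp
      then have "cycle_of_list bl x = 2" using cn nth[of i] nth[of 0] i by simp
      moreover have "gsucc q x = 2" using \<open>i + 1 = q\<close> i unfolding gsucc_def by simp
      ultimately show ?thesis by simp
    qed
  qed
  then show ?thesis unfolding CB_def bl_def[symmetric] cyc_arcs_eq[OF dbl] sbl by auto
qed

end

context gcon begin

lemma A01: "A 0 1 = s" unfolding gA_def by simp
lemma A10: "A 1 0 = 1" unfolding gA_def by simp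
lemma Asucc: "x \<in> {2..q+1} \<Longrightarrow> A x (gsucc q x) = 1"
  unfolding gA_def gsucc_def using qn by auto

lemma cl_C0: "cycle_list A [0, 1]"
  unfolding cycle_list_def
proof (intro conjI allI impI)
  fix i assume "i < length [0, 1::nat]"
  then have "i = 0 \<or> i = 1" by auto
  then show "A ([0, 1] ! i) ([0, 1] ! ((i + 1) mod length [0, 1::nat])) \<noteq> 0" using s A01 A10 by auto
qed auto

lemma cl_CB: "cycle_list A [2..<q+2]"
proof -
  have "A x (cycle_of_list [2..<q+2] x) \<noteq> 0" if "x \<in> set [2..<q+2]" for x
  proof -
    have "(x, cycle_of_list [2..<q+2] x) \<in> CB" unfolding CB_def cyc_arcs_eq[OF distinct_upt] using that by auto
    then obtain y where "y \<in> {2..q+1}" "(x, cycle_of_list [2..<q+2] x) = (y, gsucc q y)" unfolding CB_eq by auto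
    then show ?thesis using Asucc q3 by auto
  qed
  then show ?thesis unfolding cycle_list_def
  proof (intro conjI allI impI)
    show "2 \<le> length [2..<q+2]" using q3 by simp
    show "distinct [2..<q+2]" by simp
    fix i assume i: "i < length [2..<q+2]"
    assume h: "\<And>x. x \<in> set [2..<q+2] \<Longrightarrow> A x (cycle_of_list [2..<q+2] x) \<noteq> 0"
    have "[2..<q+2] ! ((i + 1) mod length [2..<q+2]) = cycle_of_list [2..<q+2] ([2..<q+2] ! i)"
      by (rule cyc_next[symmetric]) (use i in simp_all)
    moreover have "[2..<q+2] ! i \<in> set [2..<q+2]" using i by (rule nth_mem)
    then have "A ([2..<q+2] ! i) (cycle_of_list [2..<q+2] ([2..<q+2] ! i)) \<noteq> 0" by (rule h)
    ultimately show "A ([2..<q+2] ! i) ([2..<q+2] ! ((i + 1) mod length [2..<q+2])) \<noteq> 0"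
      by metis
  qed
qed

lemma card_C0: "card C0 = 2" unfolding C0_eq by simp
lemma card_CB: "card CB = q" unfolding CB_def using cyc_card[OF distinct_upt, of 2 "q+2"] q3 by (simp del: upt_Suc)

lemma fill:
  assumes X: "\<forall>x\<in>X. gsucc q x \<in> X" and y: "y \<in> X"
  shows "y + k \<le> q + 1 \<Longrightarrow> y + k \<in> X"
proof (induction k)
  case 0 then show ?case using y by simp
next
  case (Suc k)
  then have "y + k \<in> X" by simp
  moreover have "gsucc q (y + k) = y + Suc k" using Suc.prems unfolding gsucc_def by simp
  ultimately show ?case using X by metis
qed

lemma closed_all:
  assumes sub: "X \<subseteq> {2..q+1}" and X: "\<forall>x\<in>X. gsucc q x \<in> X" and x0: "x0 \<in> X"
  shows "X = {2..q+1}"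
proof
  show "{2..q+1} \<subseteq> X"
  proof
    have x0b: "x0 \<le> q + 1" using sub x0 by auto
    have "x0 + (q + 1 - x0) \<in> X" by (rule fill[OF X x0]) (use x0b in simp)
    then have "q + 1 \<in> X" using x0b by simp
    then have two: "2 \<in> X" using X unfolding gsucc_def by force
    fix z assume "z \<in> {2..q+1}"
    then have "2 + (z - 2) \<in> X" by (intro fill[OF X two]) auto
    moreover have "2 + (z - 2) = z" using \<open>z \<in> {2..q+1}\<close> by auto
    ultimately show "z \<in> X" by simp
  qed
qed (rule sub)

lemma dcyc_sub:
  assumes cl: "cycle_list A vs"
  shows "cycle_arcs vs = C0 \<or> cycle_arcs vs = CB"
proof -
  let ?L = "length vs"
  have L2: "?L \<ge> 2" and dv: "distinct vs" and arc: "\<forall>i<?L. A (vs ! i) (vs ! ((i + 1) mod ?L)) \<noteq> 0"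
    using cl unfolding cycle_list_def by auto
  have nxtL: "(i + 1) mod ?L < ?L" for i by (rule mod_less_divisor) (use L2 in linarith)
  have const: "\<forall>i<?L. gf q (vs ! i) = gf q (vs ! 0)"
    using cyc_mono_const[of vs "gf q"] L2 arc gf_mono by auto
  have eq: "gf q (vs ! i) = gf q (vs ! ((i + 1) mod ?L))" if "i < ?L" for i
    using const that nxtL by metis
  have cases: "(gf q (vs ! i) = 0 \<and> vs ! i \<le> 1 \<and> vs ! ((i + 1) mod ?L) \<le> 1) \<or>
    (gf q (vs ! i) = 1 \<and> 2 \<le> vs ! i \<and> vs ! i \<le> q + 1 \<and> vs ! ((i + 1) mod ?L) = gsucc q (vs ! i))"
    if "i < ?L" for i using gf_eq[OF _ eq[OF that]] arc that by blast
  have cardvs: "card (cycle_arcs vs) = ?L" by (rule cyc_card[OF dv])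
  have fin: "finite C0" "finite CB" unfolding C0_eq CB_eq by auto
  have L0: "0 < ?L" using L2 by linarith
  have "gf q (vs ! 0) = 0 \<or> gf q (vs ! 0) = 1" using cases[OF L0] by blast
  then show ?thesis
  proof
    assume g0: "gf q (vs ! 0) = 0"
    have small: "vs ! i \<le> 1" if "i < ?L" for i using cases[OF that] const that g0 by auto
    have sv: "set vs \<subseteq> {0, 1}"
    proof
      fix x assume "x \<in> set vs"
      then obtain i where "i < ?L" "x = vs ! i" by (auto simp: in_set_conv_nth)
      then have "x \<le> 1" using small by simp
      then show "x \<in> {0, 1}" by (cases x) auto
    qed
    have "?L = card (set vs)" using dv by (simp add: distinct_card)
    also have "\<dots> \<le> card {0, 1::nat}" using sv by (intro card_mono) auto
    finally have L: "?L = 2" using L2 by simp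
    have "cycle_arcs vs \<subseteq> C0"
    proof
      fix e assume "e \<in> cycle_arcs vs"
      then obtain i where i: "i < ?L" "e = (vs ! i, vs ! ((i + 1) mod ?L))" unfolding cycle_arcs_def by blast
      have "i = 0 \<or> i = 1" using i L by auto
      then have "(i + 1) mod ?L \<noteq> i" using L by auto
      then have "vs ! ((i + 1) mod ?L) \<noteq> vs ! i" using dv i nxtL by (simp add: nth_eq_iff_index_eq)
      moreover have "vs ! i \<le> 1" "vs ! ((i + 1) mod ?L) \<le> 1" using small i nxtL by auto
      ultimately show "e \<in> C0" unfolding C0_eq using i by auto
    qed
    then have "cycle_arcs vs = C0" using fin card_C0 cardvs L by (intro card_subset_eq) auto
    then show ?thesis ..
  next
    assume g1: "gf q (vs ! 0) = 1"
    have big: "2 \<le> vs ! i \<and> vs ! i \<le> q + 1 \<and> vs ! ((i + 1) mod ?L) = gsucc q (vs ! i)" if "i < ?L" for i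
      using cases[OF that] const that g1 by auto
    have sv: "set vs \<subseteq> {2..q+1}" using big by (auto simp: in_set_conv_nth)
    have clo: "\<forall>x\<in>set vs. gsucc q x \<in> set vs"
    proof
      fix x assume "x \<in> set vs"
      then obtain i where i: "i < ?L" "x = vs ! i" by (auto simp: in_set_conv_nth)
      then show "gsucc q x \<in> set vs" using big[OF i(1)] nxtL by (metis nth_mem)
    qed
    have "vs ! 0 \<in> set vs" using L2 by (intro nth_mem) linarith
    then have svq: "set vs = {2..q+1}" by (rule closed_all[OF sv clo])
    have "cycle_arcs vs \<subseteq> CB"
    proof
      fix e assume "e \<in> cycle_arcs vs"
      then obtain i where i: "i < ?L" "e = (vs ! i, vs ! ((i + 1) mod ?L))" unfolding cycle_arcs_def by blast
      then show "e \<in> CB" unfolding CB_eq using big[OF i(1)] by auto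
    qed
    moreover have "?L = q" using svq dv distinct_card[OF dv] by simp
    ultimately have "cycle_arcs vs = CB" using fin card_CB cardvs by (intro card_subset_eq) auto
    then show ?thesis ..
  qed
qed

lemma dcyc: "dcycles A = {C0, CB}"
proof
  show "dcycles A \<subseteq> {C0, CB}" unfolding dcycles_def using dcyc_sub by auto
  show "{C0, CB} \<subseteq> dcycles A" unfolding dcycles_def C0_def CB_def using cl_C0 cl_CB by auto
qed

lemma C0_ne_CB: "C0 \<noteq> CB"
  using card_C0 card_CB q3 by auto

lemma verts_C0: "cycle_verts C0 = {0, 1}" unfolding C0_eq cycle_verts_def by auto
lemma verts_CB: "cycle_verts CB = {2..q+1}" unfolding CB_eq cycle_verts_def by (simp add: image_image)

lemma sign_C0: "cycle_sign A C0 = s"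
  unfolding cycle_sign_def C0_eq using A01 A10 by simp

lemma sign_CB: "cycle_sign A CB = 1"
  unfolding cycle_sign_def CB_eq by (rule prod.neutral) (auto simp: Asucc)

lemma conn: "underlying_connected n A"
proof -
  define R where "R = {(u, v). A u v \<noteq> 0 \<or> A v u \<noteq> 0}"
  have step: "(i, i + 1) \<in> R" if "i + 1 < n" for i
  proof (cases "i = 0")
    case True then show ?thesis using A01 s unfolding R_def by auto
  next
    case False then have "A i (i + 1) = 1" using that unfolding gA_def by auto
    then show ?thesis unfolding R_def by auto
  qed
  have reach: "(0, i) \<in> R\<^sup>*" if "i < n" for i
    using that
  proof (induction i)
    case 0 then show ?case by simp
  next
    case (Suc i)
    then have "(0, i) \<in> R\<^sup>*" by simp
    moreover have "(i, Suc i) \<in> R" using step[of i] Suc.prems by simp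
    ultimately show ?case by (rule rtrancl_into_rtrancl)
  qed
  have sym: "R\<inverse> = R" unfolding R_def by auto
  have bk: "(i, 0) \<in> R\<^sup>*" if "i < n" for i
  proof -
    have "(i, 0) \<in> (R\<inverse>)\<^sup>*" using reach[OF that] by (rule rtrancl_converseI)
    then show ?thesis using sym by simp
  qed
  show ?thesis unfolding underlying_connected_def R_def[symmetric]
    using bk reach by (meson rtrancl_trans)
qed

lemma inDns: "in_Dns n A"
  unfolding in_Dns_def
  using sidi conn dcyc C0_ne_CB verts_C0 verts_CB by auto

lemma Dnspq: "Dns_pq n s 2 1 q A"
  unfolding Dns_pq_def cycle_len_def
  using inDns dcyc C0_ne_CB card_C0 card_CB sign_C0 sign_CB by blast

lemma Dnsevenodd: "odd q \<Longrightarrow> Dns_even_odd n A"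
  unfolding Dns_even_odd_def cycle_len_def
  using inDns dcyc card_C0 card_CB by auto

end

lemma energy_Eng: "energy n A = Eng (char_poly (adj_mat n A))"
  unfolding energy_def Eng_def ..

lemma energy_two:
  assumes D: "in_Dns n A" and c1: "c1 \<in> dcycles A" and c2: "c2 \<in> dcycles A" and ne: "c1 \<noteq> c2"
  shows "energy n A = Fr (cycle_len c1) (of_int (cycle_sign A c1)) + Fr (cycle_len c2) (of_int (cycle_sign A c2))
    \<and> cycle_len c1 + cycle_len c2 \<le> n \<and> 2 \<le> cycle_len c1 \<and> 2 \<le> cycle_len c2
    \<and> (cycle_sign A c1 = 1 \<or> cycle_sign A c1 = -1) \<and> (cycle_sign A c2 = 1 \<or> cycle_sign A c2 = -1)"
proof -
  have sd: "sidigraph n A" and cd: "card (dcycles A) = 2"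
    and dj: "\<forall>c1\<in>dcycles A. \<forall>c2\<in>dcycles A. c1 \<noteq> c2 \<longrightarrow> cycle_verts c1 \<inter> cycle_verts c2 = {}"
    using D unfolding in_Dns_def by auto
  obtain vs1 where v1: "c1 = cycle_arcs vs1" "cycle_list A vs1" using c1 unfolding dcycles_def by auto
  obtain vs2 where v2: "c2 = cycle_arcs vs2" "cycle_list A vs2" using c2 unfolding dcycles_def by auto
  have fin: "finite (dcycles A)" using cd by (intro card_ge_0_finite) simp
  have "dcycles A = {c1, c2}"
    using c1 c2 ne cd fin by (intro card_subset_eq[symmetric]) auto
  then have dc: "dcycles A = {cycle_arcs vs1, cycle_arcs vs2}" using v1 v2 by simp
  have d1: "distinct vs1" and d2: "distinct vs2" and l1: "2 \<le> length vs1" and l2: "2 \<le> length vs2"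
    using v1 v2 unfolding cycle_list_def by auto
  have "cycle_verts c1 \<inter> cycle_verts c2 = {}" using dj c1 c2 ne by blast
  then have disj: "set vs1 \<inter> set vs2 = {}"
    using v1 v2 cyc_verts[OF d1] cyc_verts[OF d2] by simp
  interpret twocyc n A vs1 vs2 using sd v1 v2 dc disj by unfold_locales auto
  have len1: "cycle_len c1 = length vs1" unfolding cycle_len_def v1 by (rule cyc_card[OF d1])
  have len2: "cycle_len c2 = length vs2" unfolding cycle_len_def v2 by (rule cyc_card[OF d2])
  have sg1: "cycle_sign A c1 = 1 \<or> cycle_sign A c1 = -1" unfolding v1 by (rule cyc_sign_pm[OF sd v1(2)])
  have sg2: "cycle_sign A c2 = 1 \<or> cycle_sign A c2 = -1" unfolding v2 by (rule cyc_sign_pm[OF sd v2(2)])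
  have le: "length vs1 + length vs2 \<le> n"
  proof -
    have "card (set vs1 \<union> set vs2) \<le> card {0..<n}" using r1 r2 by (intro card_mono) auto
    then show ?thesis using disj by (simp add: card_Un_disjoint distinct_card[OF d1] distinct_card[OF d2])
  qed
  have s1: "complex_of_int (cycle_sign A c1) \<noteq> 0" using sg1 by auto
  have s2: "complex_of_int (cycle_sign A c2) \<noteq> 0" using sg2 by auto
  have "energy n A = Fr (length vs1) (of_int (cycle_sign A (cycle_arcs vs1))) + Fr (length vs2) (of_int (cycle_sign A (cycle_arcs vs2)))"
    unfolding energy_Eng charpoly_two by (rule Eng_prod) (use l1 l2 s1 s2 v1 v2 in auto)
  then have "energy n A = Fr (length vs1) (of_int (cycle_sign A c1)) + Fr (length vs2) (of_int (cycle_sign A c2))"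
    using v1 v2 by simp
  then show ?thesis using len1 len2 le l1 l2 sg1 sg2 by simp
qed

lemma S_data:
  assumes "Dns_even_odd n S"
  shows "\<exists>pe se qo so. energy n S = Fr pe (of_int se) + Fr qo (of_int so) \<and> even pe \<and> odd qo
     \<and> 2 \<le> pe \<and> 3 \<le> qo \<and> pe + qo \<le> n \<and> (se = 1 \<or> se = -1) \<and> (so = 1 \<or> so = -1)"
proof -
  obtain c1 c2 where D: "in_Dns n S" and c: "c1 \<in> dcycles S" "c2 \<in> dcycles S"
    and par: "even (cycle_len c1)" "odd (cycle_len c2)"
    using assms unfolding Dns_even_odd_def by blast
  have "c1 \<noteq> c2" using par by auto
  from energy_two[OF D c this] have e: "energy n S = Fr (cycle_len c1) (of_int (cycle_sign S c1)) + Fr (cycle_len c2) (of_int (cycle_sign S c2))"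
    and r: "cycle_len c1 + cycle_len c2 \<le> n" "2 \<le> cycle_len c1" "2 \<le> cycle_len c2"
      "cycle_sign S c1 = 1 \<or> cycle_sign S c1 = -1" "cycle_sign S c2 = 1 \<or> cycle_sign S c2 = -1" by auto
  have "3 \<le> cycle_len c2" using r(3) par(2) by (cases "cycle_len c2 = 2") auto
  then show ?thesis using e r par by blast
qed

lemma Fr_odd_int: "odd q \<Longrightarrow> s = 1 \<or> s = -1 \<Longrightarrow> Fr q (of_int s) = 1 / sin (pi / (2 * real q))"
  using Fr_odd[of q "of_int s"] by auto

lemma Fr_nonneg: "0 \<le> Fr k s" unfolding Fr_def by (rule sum_nonneg) simp

lemma Fr_even_int:
  assumes "even p" "2 \<le> p" "s = 1 \<or> s = -1"
  shows "Fr p (of_int s) \<le> 2 / sin (pi / real p)"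
proof -
  obtain m where m: "p = 2 * m" using assms(1) by blast
  then have "m > 0" using assms(2) by simp
  then have "Fr (2*m) (of_int s) \<le> 2 / sin (pi / real (2*m))" using assms(3) by (intro Fr_even_bound) auto
  then show ?thesis using m by simp
qed

lemma Fr_2_int: "s = 1 \<or> s = -1 \<Longrightarrow> Fr 2 (of_int s) \<le> 2"
  using Fr_2_1 Fr_2_m1 by auto

theorem theorem3p27:
  fixes n :: nat
  assumes "n > 5"
  shows "(odd n \<longrightarrow>
            (\<exists>T. Dns_even_odd n T \<and> Dns_pq n 1 2 1 (n - 2) T) \<and>
            (\<forall>S T. Dns_even_odd n S \<and> Dns_pq n 1 2 1 (n - 2) T \<longrightarrow>
                   energy n S \<le> energy n T)) \<and>
         ((\<exists>T. Dns_even_odd n T \<and> Dns_pq n (-1) 2 1 3 T) \<and>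
          (\<forall>S T. Dns_even_odd n S \<and> Dns_pq n (-1) 2 1 3 T \<longrightarrow>
                 energy n T \<le> energy n S))"
proof (intro conjI impI allI)
  assume on: "odd n"
  interpret g: gcon n "n - 2" 1 using assms by unfold_locales auto
  have "odd (n - 2)" using on assms by simp
  then show "\<exists>T. Dns_even_odd n T \<and> Dns_pq n 1 2 1 (n - 2) T"
    using g.Dnsevenodd g.Dnspq by blast
next
  fix S T assume on: "odd n"
  assume ST: "Dns_even_odd n S \<and> Dns_pq n 1 2 1 (n - 2) T"
  obtain c1 c2 where D: "in_Dns n T" and c: "c1 \<in> dcycles T" "c2 \<in> dcycles T" "c1 \<noteq> c2"
    and cc: "cycle_len c1 = 2" "cycle_sign T c1 = 1" "cycle_len c2 = n - 2" "cycle_sign T c2 = 1"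
    using ST unfolding Dns_pq_def by blast
  have oq: "odd (n - 2)" using on assms by simp
  have eT: "energy n T = 2 + 1 / sin (pi / (2 * real (n - 2)))"
    using energy_two[OF D c] cc Fr_2_1 Fr_odd_int[OF oq, of 1] by simp
  obtain pe se qo so where eS: "energy n S = Fr pe (of_int se) + Fr qo (of_int so)"
    and h: "even pe" "odd qo" "2 \<le> pe" "3 \<le> qo" "pe + qo \<le> n" "se = 1 \<or> se = -1" "so = 1 \<or> so = -1"
    using S_data ST by blast
  have fq: "Fr qo (of_int so) = 1 / sin (pi / (2 * real qo))" by (rule Fr_odd_int[OF h(2) h(7)])
  show "energy n S \<le> energy n T"
  proof (cases "pe = 2")
    case True
    have "qo \<le> n - 2" using h True by simp
    then have "1 / sin (pi / (2 * real qo)) \<le> 1 / sin (pi / (2 * real (n - 2)))"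
      using h by (intro odd_mono) auto
    moreover have "Fr pe (of_int se) \<le> 2" using True Fr_2_int[OF h(6)] by simp
    ultimately show ?thesis using eS eT fq by simp
  next
    case False
    then have p4: "4 \<le> pe" using h(1,3) by presburger
    have "Fr pe (of_int se) \<le> 2 / sin (pi / real pe)" by (rule Fr_even_int[OF h(1) h(3) h(6)])
    moreover have "2 / sin (pi / real pe) + 1 / sin (pi / (2 * real qo)) \<le> 2 + 1 / sin (pi / (2 * real (n - 2)))"
      by (rule main_ineq[OF p4 h(4) h(5)])
    ultimately show ?thesis using eS eT fq by simp
  qed
next
  interpret g: gcon n 3 "-1" using assms by unfold_locales auto
  show "\<exists>T. Dns_even_odd n T \<and> Dns_pq n (-1) 2 1 3 T"
    using g.Dnsevenodd g.Dnspq by auto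
next
  fix S T assume ST: "Dns_even_odd n S \<and> Dns_pq n (-1) 2 1 3 T"
  obtain c1 c2 where D: "in_Dns n T" and c: "c1 \<in> dcycles T" "c2 \<in> dcycles T" "c1 \<noteq> c2"
    and cc: "cycle_len c1 = 2" "cycle_sign T c1 = -1" "cycle_len c2 = 3" "cycle_sign T c2 = 1"
    using ST unfolding Dns_pq_def by blast
  have eT: "energy n T = 2"
    using energy_two[OF D c] cc Fr_2_m1 Fr_3[of 1] by simp
  obtain pe se qo so where eS: "energy n S = Fr pe (of_int se) + Fr qo (of_int so)"
    and h: "even pe" "odd qo" "2 \<le> pe" "3 \<le> qo" "pe + qo \<le> n" "se = 1 \<or> se = -1" "so = 1 \<or> so = -1"
    using S_data ST by blast
  have fq: "Fr qo (of_int so) = 1 / sin (pi / (2 * real qo))" by (rule Fr_odd_int[OF h(2) h(7)])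
  have "1 / sin (pi / (2 * real (3::nat))) \<le> 1 / sin (pi / (2 * real qo))"
    using h by (intro odd_mono) auto
  moreover have "1 / sin (pi / (2 * real (3::nat))) = 2"
    using Fr_3[of 1] Fr_odd[of 3 1] by simp
  moreover have "0 \<le> Fr pe (of_int se)" by (rule Fr_nonneg)
  ultimately show "energy n T \<le> energy n S" using eS eT fq by simp
qed

end
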